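(* Let $T$ be an unbounded selfadjoint operator in $H$. Then \[ W_e(T)=\operatorname{conv}\big(\widehat\sigma_e(T)\big)\setminus\{\pm\infty\}. \]
   Context: $H$ is a separable infinite-dimensional complex Hilbert space. $W_e(T)=\{\lambda\in\mathbb C:\exists x_n\in\operatorname{dom}(T),\|x_n\|=1,x_n\stackrel{w}{\to}0,\langle Tx_n,x_n\rangle\to\lambda\}$. $\sigma_e(T)=\{\lambda:\exists x_n\in\operatorname{dom}(T),\|x_n\|=1,x_n\stackrel{w}{\to}0,\|(T-\lambda)x_n\|\to0\}$. For selfadjoint $T$, the extended essential spectrum $\widehat\sigma_e(T)\subset\mathbb R\cup\{+\infty,-\infty\}$ is $\sigma_e(T)$ with $+\infty$ added if $T$ is unbounded from above and $-\infty$ added if $T$ is unbounded from below; the convex hull is taken in the extended real line $\mathbb R\cup\{\pm\infty\}$. *)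

theory Defs
  imports Complex_Main "HOL-Library.Extended_Real"
begin

text \<open>The separable infinite-dimensional complex Hilbert space H is modelled
  (up to unitary equivalence) by l2(N), square-summable complex sequences.\<close>

type_synonym vec = "nat \<Rightarrow> complex"

definition vadd :: "vec \<Rightarrow> vec \<Rightarrow> vec" where
  "vadd x y = (\<lambda>n. x n + y n)"

definition vsub :: "vec \<Rightarrow> vec \<Rightarrow> vec" where
  "vsub x y = (\<lambda>n. x n - y n)"

definition l2 :: "vec set" where
  "l2 = {x. summable (\<lambda>n. (cmod (x n))\<^sup>2)}"

definition l2norm :: "vec \<Rightarrow> real" where
  "l2norm x = sqrt (\<Sum>n. (cmod (x n))\<^sup>2)"

definition linner :: "vec \<Rightarrow> vec \<Rightarrow> complex" where
  "linner x y = (\<Sum>n. x n * cnj (y n))"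

definition weak_to_zero :: "(nat \<Rightarrow> vec) \<Rightarrow> bool" where
  "weak_to_zero xs \<longleftrightarrow> (\<forall>y\<in>l2. (\<lambda>k. linner (xs k) y) \<longlonglongrightarrow> 0)"

definition lin_op :: "vec set \<Rightarrow> (vec \<Rightarrow> vec) \<Rightarrow> bool" where
  "lin_op D T \<longleftrightarrow> D \<subseteq> l2 \<and> (\<lambda>n. 0) \<in> D \<and>
     (\<forall>x\<in>D. \<forall>y\<in>D. vadd x y \<in> D) \<and> (\<forall>c. \<forall>x\<in>D. (\<lambda>n. c * x n) \<in> D) \<and>
     (\<forall>x\<in>D. T x \<in> l2) \<and>
     (\<forall>x\<in>D. \<forall>y\<in>D. T (vadd x y) = vadd (T x) (T y)) \<and>
     (\<forall>c. \<forall>x\<in>D. T (\<lambda>n. c * x n) = (\<lambda>n. c * T x n))"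

definition densely_defined :: "vec set \<Rightarrow> bool" where
  "densely_defined D \<longleftrightarrow> (\<forall>x\<in>l2. \<forall>e>0. \<exists>d\<in>D. l2norm (vsub x d) < e)"

text \<open>Selfadjoint: densely defined and T = T*, i.e. dom T* = dom T and T* = T on it.\<close>
definition selfadjoint :: "vec set \<Rightarrow> (vec \<Rightarrow> vec) \<Rightarrow> bool" where
  "selfadjoint D T \<longleftrightarrow> lin_op D T \<and> densely_defined D \<and>
     (\<forall>y\<in>l2. y \<in> D \<longleftrightarrow> (\<exists>z\<in>l2. \<forall>x\<in>D. linner (T x) y = linner x z)) \<and>
     (\<forall>x\<in>D. \<forall>y\<in>D. linner (T x) y = linner x (T y))"

definition bounded_op :: "vec set \<Rightarrow> (vec \<Rightarrow> vec) \<Rightarrow> bool" where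
  "bounded_op D T \<longleftrightarrow> (\<exists>C. \<forall>x\<in>D. l2norm (T x) \<le> C * l2norm x)"

definition bounded_above_op :: "vec set \<Rightarrow> (vec \<Rightarrow> vec) \<Rightarrow> bool" where
  "bounded_above_op D T \<longleftrightarrow> (\<exists>C. \<forall>x\<in>D. Re (linner (T x) x) \<le> C * (l2norm x)\<^sup>2)"

definition bounded_below_op :: "vec set \<Rightarrow> (vec \<Rightarrow> vec) \<Rightarrow> bool" where
  "bounded_below_op D T \<longleftrightarrow> (\<exists>C. \<forall>x\<in>D. C * (l2norm x)\<^sup>2 \<le> Re (linner (T x) x))"

definition ess_num_range :: "vec set \<Rightarrow> (vec \<Rightarrow> vec) \<Rightarrow> complex set" where
  "ess_num_range D T = {\<mu>. \<exists>xs. (\<forall>k. xs k \<in> D \<and> l2norm (xs k) = 1) \<and> weak_to_zero xs \<and>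
       (\<lambda>k. linner (T (xs k)) (xs k)) \<longlonglongrightarrow> \<mu>}"

definition ess_spec :: "vec set \<Rightarrow> (vec \<Rightarrow> vec) \<Rightarrow> complex set" where
  "ess_spec D T = {\<mu>. \<exists>xs. (\<forall>k. xs k \<in> D \<and> l2norm (xs k) = 1) \<and> weak_to_zero xs \<and>
       (\<lambda>k. l2norm (vsub (T (xs k)) (\<lambda>n. \<mu> * xs k n))) \<longlonglongrightarrow> 0}"

text \<open>Extended essential spectrum of a selfadjoint operator (its essential spectrum is real).\<close>
definition ext_ess_spec :: "vec set \<Rightarrow> (vec \<Rightarrow> vec) \<Rightarrow> ereal set" where
  "ext_ess_spec D T = ereal ` {r. complex_of_real r \<in> ess_spec D T}
     \<union> (if bounded_above_op D T then {} else {\<infinity>})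
     \<union> (if bounded_below_op D T then {} else {-\<infinity>})"

text \<open>Convex hull in the extended real line (= order-convex hull).\<close>
definition conv_ereal :: "ereal set \<Rightarrow> ereal set" where
  "conv_ereal S = {x. \<exists>a\<in>S. \<exists>b\<in>S. a \<le> x \<and> x \<le> b}"

end

theory Submission
  imports Defs "HOL-Analysis.Inner_Product"
begin

lemma quad_cs:
  fixes a b c :: real
  assumes "\<And>t. 0 \<le> a + 2*b*t + c*t\<^sup>2"
  shows "b\<^sup>2 \<le> a*c"
proof -
  have a0: "0 \<le> a" using assms[of 0] by simp
  show ?thesis
  proof (cases "c = 0")
    case True
    show ?thesis
    proof (rule ccontr)
      assume "\<not> ?thesis"
      then have "b \<noteq> 0" using True by simp
      have "0 \<le> a + 2*b*(-(a+1)/(2*b)) + c*(-(a+1)/(2*b))\<^sup>2" by (rule assms)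
      also have "\<dots> = -1" using True \<open>b\<noteq>0\<close> by (simp add: field_simps)
      finally show False by simp
    qed
  next
    case False
    have c0: "c > 0"
    proof (rule ccontr)
      assume "\<not> c > 0" then have "c < 0" using False by simp
      define t where "t = sqrt ((a+1)/(-c))"
      have tt: "t\<^sup>2 = (a+1)/(-c)" unfolding t_def using a0 \<open>c<0\<close> by (simp add: divide_nonneg_neg)
      have "0 \<le> a + 2*b*t + c*t\<^sup>2" "0 \<le> a + 2*b*(-t) + c*(-t)\<^sup>2" by (rule assms)+
      then have "0 \<le> 2*a + 2*c*t\<^sup>2" by simp
      also have "2*c*t\<^sup>2 = -2*(a+1)" unfolding tt using \<open>c<0\<close> by (simp add: field_simps)
      finally show False by simp
    qed
    have "0 \<le> a + 2*b*(-b/c) + c*(-b/c)\<^sup>2" by (rule assms)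
    also have "\<dots> = a - b\<^sup>2/c" using c0 by (simp add: field_simps power2_eq_square)
    finally show ?thesis using c0 by (simp add: field_simps)
  qed
qed

definition orthonormal_upto :: "(nat \<Rightarrow> 'a::real_inner) \<Rightarrow> nat \<Rightarrow> bool" where
  "orthonormal_upto e n \<longleftrightarrow> (\<forall>i<n. norm (e i) = 1) \<and> (\<forall>i<n. \<forall>j<n. i \<noteq> j \<longrightarrow> inner (e i) (e j) = 0)"

definition orthonormal_seq :: "(nat \<Rightarrow> 'a::real_inner) \<Rightarrow> bool" where
  "orthonormal_seq g \<longleftrightarrow> (\<forall>i. norm (g i) = 1) \<and> (\<forall>i j. i \<noteq> j \<longrightarrow> inner (g i) (g j) = 0)"

lemma ons_seq:
  fixes R :: "nat \<Rightarrow> 'a::real_inner \<Rightarrow> bool"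
  assumes step: "\<And>n e. orthonormal_upto e n \<Longrightarrow> (\<forall>i<n. R i (e i)) \<Longrightarrow>
      \<exists>y. R n y \<and> norm y = 1 \<and> (\<forall>i<n. inner y (e i) = 0)"
  shows "\<exists>g. (\<forall>n. R n (g n)) \<and> orthonormal_seq g"
proof -
  let ?P = "\<lambda>n e. orthonormal_upto e n \<and> (\<forall>i<n. R i (e i))"
  let ?Q = "\<lambda>n e e'. \<forall>i<n. e' i = e i"
  have "\<exists>f. \<forall>n. ?P n (f n) \<and> ?Q n (f n) (f (Suc n))"
  proof (rule dependent_nat_choice)
    show "\<exists>x. ?P 0 x" by (auto simp: orthonormal_upto_def)
  next
    fix e n assume "?P n e"
    then obtain y where y: "R n y" "norm y = 1" "\<forall>i<n. inner y (e i) = 0"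
      using step by blast
    have "?P (Suc n) (e(n := y))"
      using \<open>?P n e\<close> y unfolding orthonormal_upto_def
      by (auto simp: less_Suc_eq inner_commute)
    moreover have "?Q n e (e(n:=y))" by simp
    ultimately show "\<exists>e'. ?P (Suc n) e' \<and> ?Q n e e'" by blast
  qed
  then obtain f where f: "\<And>n. ?P n (f n)" "\<And>n. ?Q n (f n) (f (Suc n))" by blast
  have stab: "f (i + Suc k) i = f (Suc i) i" for i k
    by (induction k) (use f(2) in auto)
  have stab2: "m > i \<Longrightarrow> f m i = f (Suc i) i" for m i
    using stab[of i "m - Suc i"] by simp
  define g where "g i = f (Suc i) i" for i
  have "R n (g n)" for n using f(1)[of "Suc n"] by (simp add: g_def)
  moreover have "norm (g n) = 1" for n using f(1)[of "Suc n"] by (simp add: g_def orthonormal_upto_def)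
  moreover have "inner (g i) (g j) = 0" if "i \<noteq> j" for i j
  proof -
    define m where "m = Suc (max i j)"
    have "g i = f m i" "g j = f m j" using stab2[of i m] stab2[of j m] by (auto simp: g_def m_def)
    then show ?thesis using f(1)[of m] that unfolding orthonormal_upto_def m_def by auto
  qed
  ultimately show ?thesis unfolding orthonormal_seq_def by blast
qed

lemma bessel:
  fixes g :: "nat \<Rightarrow> 'a::real_inner"
  assumes "orthonormal_seq g"
  shows "(\<Sum>i<n. (inner y (g i))\<^sup>2) \<le> (norm y)\<^sup>2"
proof -
  have o: "inner (g i) (g j) = (if i = j then 1 else 0)" for i j
    using assms unfolding orthonormal_seq_def by (auto simp: dot_square_norm)
  define p where "p = (\<Sum>i<n. inner y (g i) *\<^sub>R g i)"
  have ip: "inner y p = (\<Sum>i<n. (inner y (g i))\<^sup>2)"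
    unfolding p_def by (simp add: inner_sum_right power2_eq_square)
  have pp: "inner p p = (\<Sum>i<n. (inner y (g i))\<^sup>2)"
    unfolding p_def by (simp add: inner_sum_right inner_sum_left o power2_eq_square if_distrib sum.If_cases)
  have "0 \<le> inner (y - p) (y - p)" by simp
  also have "\<dots> = inner y y - 2 * inner y p + inner p p" by (simp add: inner_diff inner_commute)
  finally show ?thesis using ip pp by (simp add: dot_square_norm)
qed

lemma ortho_wnull:
  fixes g :: "nat \<Rightarrow> 'a::real_inner"
  assumes "orthonormal_seq g"
  shows "(\<lambda>k. inner (g k) y) \<longlonglongrightarrow> 0"
proof -
  have "summable (\<lambda>i. (inner y (g i))\<^sup>2)"
    using bessel[OF assms] by (intro summableI_nonneg_bounded) auto
  then have "(\<lambda>i. (inner y (g i))\<^sup>2) \<longlonglongrightarrow> 0" by (rule summable_LIMSEQ_zero)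
  then have "(\<lambda>i. sqrt ((inner y (g i))\<^sup>2)) \<longlonglongrightarrow> sqrt 0" by (rule tendsto_real_sqrt)
  then have "(\<lambda>i. \<bar>inner (g i) y\<bar>) \<longlonglongrightarrow> 0" by (simp add: inner_commute)
  then show ?thesis by (simp add: tendsto_rabs_zero_iff)
qed


definition wnull :: "(nat \<Rightarrow> 'a::real_inner) \<Rightarrow> bool" where
  "wnull xs \<longleftrightarrow> (\<forall>y. (\<lambda>k. inner (xs k) y) \<longlonglongrightarrow> 0)"

definition We :: "'a::real_inner set \<Rightarrow> ('a \<Rightarrow> 'a) \<Rightarrow> real \<Rightarrow> bool" where
  "We D T l \<longleftrightarrow> (\<exists>xs. (\<forall>k. xs k \<in> D \<and> norm (xs k) = 1) \<and> wnull xs \<and>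
      (\<lambda>k. inner (T (xs k)) (xs k)) \<longlonglongrightarrow> l)"

definition Se :: "'a::real_inner set \<Rightarrow> ('a \<Rightarrow> 'a) \<Rightarrow> real \<Rightarrow> bool" where
  "Se D T l \<longleftrightarrow> (\<exists>xs. (\<forall>k. xs k \<in> D \<and> norm (xs k) = 1) \<and> wnull xs \<and>
      (\<lambda>k. norm (T (xs k) - l *\<^sub>R xs k)) \<longlonglongrightarrow> 0)"

definition bdd_ab :: "'a::real_inner set \<Rightarrow> ('a \<Rightarrow> 'a) \<Rightarrow> bool" where
  "bdd_ab D T \<longleftrightarrow> (\<exists>C. \<forall>x\<in>D. inner (T x) x \<le> C * (norm x)\<^sup>2)"

definition bdd_bl :: "'a::real_inner set \<Rightarrow> ('a \<Rightarrow> 'a) \<Rightarrow> bool" where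
  "bdd_bl D T \<longleftrightarrow> (\<exists>C. \<forall>x\<in>D. C * (norm x)\<^sup>2 \<le> inner (T x) x)"

lemma wnull_subseq: "wnull xs \<Longrightarrow> strict_mono f \<Longrightarrow> wnull (xs \<circ> f)"
  unfolding wnull_def using LIMSEQ_subseq_LIMSEQ[of _ 0 f] by (auto simp: comp_def)

lemma wnull_ortho: "orthonormal_seq g \<Longrightarrow> wnull g"
  unfolding wnull_def using ortho_wnull by blast

lemma wnull_shift: "wnull xs \<Longrightarrow> wnull (\<lambda>k. xs (k + N))"
  unfolding wnull_def by (auto intro: LIMSEQ_ignore_initial_segment[where k=N, of _ 0, simplified])

lemma tendsto_ge_index:
  fixes f :: "nat \<Rightarrow> real"
  assumes "f \<longlonglongrightarrow> L" "\<And>k. m k \<ge> k"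
  shows "(\<lambda>k. f (m k)) \<longlonglongrightarrow> L"
proof -
  have "filterlim m sequentially sequentially"
    using assms(2) by (intro filterlim_at_top_mono[OF filterlim_ident]) auto
  then show ?thesis using filterlim_compose[OF assms(1)] by blast
qed

locale symop =
  fixes D :: "'a::real_inner set" and T :: "'a \<Rightarrow> 'a"
  assumes D0: "0 \<in> D" and Dadd: "x \<in> D \<Longrightarrow> y \<in> D \<Longrightarrow> x + y \<in> D"
    and Dscale: "x \<in> D \<Longrightarrow> c *\<^sub>R x \<in> D"
    and Tadd: "x \<in> D \<Longrightarrow> y \<in> D \<Longrightarrow> T (x + y) = T x + T y"
    and Tscale: "x \<in> D \<Longrightarrow> T (c *\<^sub>R x) = c *\<^sub>R T x"
    and sym: "x \<in> D \<Longrightarrow> y \<in> D \<Longrightarrow> inner (T x) y = inner x (T y)"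
begin

lemma Dminus: "x \<in> D \<Longrightarrow> - x \<in> D"
  using Dscale[of x "-1"] by simp

lemma Ddiff: "x \<in> D \<Longrightarrow> y \<in> D \<Longrightarrow> x - y \<in> D"
  using Dadd[of x "-y"] Dminus by simp

lemma T0: "T 0 = 0"
  using Tscale[OF D0, of 0] by simp

lemma Tminus: "x \<in> D \<Longrightarrow> T (- x) = - T x"
  using Tscale[of x "-1"] by simp

lemma Tdiff: "x \<in> D \<Longrightarrow> y \<in> D \<Longrightarrow> T (x - y) = T x - T y"
  using Tadd[of x "-y"] Dminus Tminus by simp

lemma Dsum: "finite A \<Longrightarrow> (\<And>i. i \<in> A \<Longrightarrow> e i \<in> D) \<Longrightarrow> (\<Sum>i\<in>A. c i *\<^sub>R e i) \<in> D"
  by (induction A rule: finite_induct) (auto intro: D0 Dadd Dscale)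

lemma Tsum: "finite A \<Longrightarrow> (\<And>i. i \<in> A \<Longrightarrow> e i \<in> D) \<Longrightarrow>
    T (\<Sum>i\<in>A. c i *\<^sub>R e i) = (\<Sum>i\<in>A. c i *\<^sub>R T (e i))"
proof (induction A rule: finite_induct)
  case empty then show ?case by (simp add: T0)
next
  case (insert a A)
  then show ?case by (simp add: Tadd Dscale Dsum Tscale)
qed

lemma q_add: "x \<in> D \<Longrightarrow> y \<in> D \<Longrightarrow>
   inner (T (x + y)) (x + y) = inner (T x) x + 2 * inner x (T y) + inner (T y) y"
proof -
  assume a: "x \<in> D" "y \<in> D"
  have "inner y (T x) = inner x (T y)" using sym[OF a] by (simp add: inner_commute)
  then show ?thesis using a by (simp add: Tadd inner_add_left inner_add_right inner_commute)
qed

lemma q_scale: "x \<in> D \<Longrightarrow> inner (T (c *\<^sub>R x)) (c *\<^sub>R x) = c\<^sup>2 * inner (T x) x"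
  by (simp add: Tscale power2_eq_square)

lemma We_sub:
  assumes xs: "\<And>k. xs k \<in> D" "\<And>k. norm (xs k) = 1" "wnull xs"
    and bnd: "\<And>k. a \<le> inner (T (xs k)) (xs k)" "\<And>k. inner (T (xs k)) (xs k) \<le> b"
  shows "\<exists>v. a \<le> v \<and> v \<le> b \<and> We D T v"
proof -
  define s where "s k = inner (T (xs k)) (xs k)" for k
  obtain f where f: "strict_mono f" "monoseq (\<lambda>n. s (f n))" using seq_monosub by blast
  have "norm (s (f n)) \<le> \<bar>a\<bar> + \<bar>b\<bar>" for n
    using bnd(1)[of "f n"] bnd(2)[of "f n"] unfolding s_def real_norm_def by linarith
  then have "Bseq (\<lambda>n. s (f n))" by (intro BseqI') auto
  then have "convergent (\<lambda>n. s (f n))" using f(2) Bseq_monoseq_convergent by blast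
  then obtain v where v: "(\<lambda>n. s (f n)) \<longlonglongrightarrow> v" unfolding convergent_def by blast
  have "a \<le> v" using v bnd(1) by (intro LIMSEQ_le_const) (auto simp: s_def)
  moreover have "v \<le> b" using v bnd(2) by (intro LIMSEQ_le_const2) (auto simp: s_def)
  moreover have "We D T v" unfolding We_def
    using xs v wnull_subseq[OF xs(3) f(1)] by (intro exI[of _ "xs \<circ> f"]) (auto simp: s_def)
  ultimately show ?thesis by blast
qed

lemma Se_We: "Se D T l \<Longrightarrow> We D T l"
proof -
  assume "Se D T l"
  then obtain xs where xs: "\<And>k. xs k \<in> D" "\<And>k. norm (xs k) = 1" "wnull xs"
    and lim: "(\<lambda>k. norm (T (xs k) - l *\<^sub>R xs k)) \<longlonglongrightarrow> 0" unfolding Se_def by blast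
  have "\<bar>inner (T (xs k)) (xs k) - l\<bar> \<le> norm (T (xs k) - l *\<^sub>R xs k)" for k
  proof -
    have "inner (T (xs k)) (xs k) - l = inner (T (xs k) - l *\<^sub>R xs k) (xs k)"
      using xs(2)[of k] by (simp add: inner_diff_left dot_square_norm)
    also have "\<bar>\<dots>\<bar> \<le> norm (T (xs k) - l *\<^sub>R xs k)"
      using Cauchy_Schwarz_ineq2[of "T (xs k) - l *\<^sub>R xs k" "xs k"] xs(2)[of k] by simp
    finally show ?thesis .
  qed
  then have "(\<lambda>k. inner (T (xs k)) (xs k) - l) \<longlonglongrightarrow> 0"
    using lim by (intro tendsto_0_le[OF lim, where K=1]) (auto intro: always_eventually)
  then have "(\<lambda>k. inner (T (xs k)) (xs k)) \<longlonglongrightarrow> l" by (simp add: LIM_zero_iff)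
  then show ?thesis unfolding We_def using xs by blast
qed

end

context symop begin

lemma unbdd_seq:
  assumes nb: "\<not> bdd_ab D T"
  shows "\<exists>g. orthonormal_seq g \<and> (\<forall>n. g n \<in> D \<and> real n \<le> inner (T (g n)) (g n))"
proof -
  have "\<exists>g. (\<forall>n. g n \<in> D \<and> real n \<le> inner (T (g n)) (g n)) \<and> orthonormal_seq g"
  proof (rule ons_seq)
    fix n e
    assume orth: "orthonormal_upto e n" and Re: "\<forall>i<n. e i \<in> D \<and> real i \<le> inner (T (e i)) (e i)"
    show "\<exists>y. (y \<in> D \<and> real n \<le> inner (T y) y) \<and> norm y = 1 \<and> (\<forall>i<n. inner y (e i) = 0)"
    proof (rule ccontr)
      assume H: "\<not> ?thesis"
      have eD: "\<And>i. i < n \<Longrightarrow> e i \<in> D" using Re by blast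
      have en: "\<And>i. i < n \<Longrightarrow> norm (e i) = 1" using orth unfolding orthonormal_upto_def by blast
      have eo: "\<And>i j. i < n \<Longrightarrow> j < n \<Longrightarrow> inner (e i) (e j) = (if i = j then 1 else 0)"
        using orth unfolding orthonormal_upto_def by (auto simp: dot_square_norm)
      have hw: "inner (T w) w \<le> real n * (norm w)\<^sup>2" if w: "w \<in> D" "\<forall>i<n. inner w (e i) = 0" for w
      proof (cases "w = 0")
        case True then show ?thesis by (simp add: T0)
      next
        case False
        define y where "y = (1 / norm w) *\<^sub>R w"
        have "y \<in> D" "norm y = 1" "\<forall>i<n. inner y (e i) = 0"
          using w False by (auto simp: y_def Dscale)
        then have "\<not> real n \<le> inner (T y) y" using H by blast
        moreover have "inner (T y) y = inner (T w) w / (norm w)\<^sup>2"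
          unfolding y_def using q_scale[OF w(1)] by (simp add: power_divide)
        ultimately show ?thesis using False by (simp add: field_simps)
      qed
      define K where "K = (\<Sum>i<n. norm (T (e i)))"
      have K0: "0 \<le> K" unfolding K_def by (simp add: sum_nonneg)
      define C where "C = real n * (1 + real n)\<^sup>2 + 2 * (1 + real n) * K + real n * K"
      have "bdd_ab D T"
        unfolding bdd_ab_def
      proof (intro exI[of _ C] ballI)
        fix x assume x: "x \<in> D"
        define c where "c i = inner x (e i)" for i
        define p where "p = (\<Sum>i<n. c i *\<^sub>R e i)"
        define w where "w = x - p"
        have pD: "p \<in> D" unfolding p_def using eD by (intro Dsum) auto
        have wD: "w \<in> D" unfolding w_def using x pD by (rule Ddiff)
        have xwp: "x = w + p" unfolding w_def by simp
        have cb: "\<bar>c i\<bar> \<le> norm x" if "i < n" for i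
          using Cauchy_Schwarz_ineq2[of x "e i"] en[OF that] unfolding c_def by simp
        have wo: "\<forall>j<n. inner w (e j) = 0"
        proof (intro allI impI)
          fix j assume j: "j < n"
          have "inner p (e j) = (\<Sum>i<n. c i * (if i = j then 1 else 0))"
            unfolding p_def by (simp add: inner_sum_left eo j)
          also have "\<dots> = c j" using j by (simp add: if_distrib sum.delta cong: if_cong)
          finally show "inner w (e j) = 0" unfolding w_def c_def by (simp add: inner_diff_left)
        qed
        have pn: "norm p \<le> real n * norm x"
        proof -
          have "norm p \<le> (\<Sum>i<n. norm (c i *\<^sub>R e i))" unfolding p_def by (rule norm_sum)
          also have "\<dots> \<le> (\<Sum>i<n. norm x)" using cb en by (intro sum_mono) auto
          finally show ?thesis by simp
        qed
        have Tp: "T p = (\<Sum>i<n. c i *\<^sub>R T (e i))" unfolding p_def using eD by (intro Tsum) auto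
        have Tpn: "norm (T p) \<le> K * norm x"
        proof -
          have "norm (T p) \<le> (\<Sum>i<n. norm (c i *\<^sub>R T (e i)))" unfolding Tp by (rule norm_sum)
          also have "\<dots> \<le> (\<Sum>i<n. norm x * norm (T (e i)))"
            using cb by (intro sum_mono) (auto intro: mult_right_mono)
          finally show ?thesis by (simp add: K_def sum_distrib_left mult.commute)
        qed
        have wn: "norm w \<le> (1 + real n) * norm x"
          using norm_triangle_ineq4[of x p] pn unfolding w_def by (simp add: algebra_simps)
        have nx: "0 \<le> norm x" by simp
        have t1: "inner (T w) w \<le> real n * ((1 + real n) * norm x)\<^sup>2"
          using hw[OF wD wo] wn by (smt (verit) mult_left_mono norm_ge_zero of_nat_0_le_iff power_mono)
        have t2: "inner w (T p) \<le> ((1 + real n) * norm x) * (K * norm x)"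
          using Cauchy_Schwarz_ineq2[of w "T p"] wn Tpn
          by (smt (verit) mult_mono norm_ge_zero real_sqrt_abs real_sqrt_le_iff)
        have t3: "inner (T p) p \<le> (K * norm x) * (real n * norm x)"
          using Cauchy_Schwarz_ineq2[of "T p" p] Tpn pn
          by (smt (verit) mult_mono norm_ge_zero real_sqrt_abs real_sqrt_le_iff)
        have "inner (T x) x = inner (T w) w + 2 * inner w (T p) + inner (T p) p"
          unfolding xwp by (rule q_add[OF wD pD])
        also have "\<dots> \<le> real n * ((1 + real n) * norm x)\<^sup>2 + 2 * (((1 + real n) * norm x) * (K * norm x))
            + (K * norm x) * (real n * norm x)" using t1 t2 t3 by linarith
        also have "\<dots> = C * (norm x)\<^sup>2" unfolding C_def by (simp add: power2_eq_square algebra_simps)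
        finally show "inner (T x) x \<le> C * (norm x)\<^sup>2" .
      qed
      then show False using nb by blast
    qed
  qed
  then show ?thesis by blast
qed

end

context symop begin

lemma mix:
  assumes xs: "\<And>k. xs k \<in> D" "\<And>k. norm (xs k) = 1" "wnull xs" "\<And>k. inner (T (xs k)) (xs k) \<le> l"
    and ys: "\<And>k. ys k \<in> D" "\<And>k. norm (ys k) = 1" "wnull ys" "\<And>k. l \<le> inner (T (ys k)) (ys k)"
  shows "We D T l"
proof -
  have "\<exists>m\<ge>k. \<bar>inner (xs k) (ys m)\<bar> \<le> 1/8" for k
  proof -
    have L: "(\<lambda>m. inner (ys m) (xs k)) \<longlonglongrightarrow> 0" using ys(3) unfolding wnull_def by blast
    have "eventually (\<lambda>m. \<bar>inner (ys m) (xs k)\<bar> < 1/8) sequentially"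
      using tendstoD[OF L, of "1/8"] by (simp add: dist_real_def)
    then obtain N where N: "\<And>m. m \<ge> N \<Longrightarrow> \<bar>inner (ys m) (xs k)\<bar> < 1/8"
      unfolding eventually_sequentially by blast
    have "\<bar>inner (ys (max k N)) (xs k)\<bar> < 1/8" by (rule N) simp
    then have "\<bar>inner (xs k) (ys (max k N))\<bar> < 1/8" by (simp only: inner_commute)
    then show ?thesis by (intro exI[of _ "max k N"]) auto
  qed
  then obtain m where m: "\<And>k. m k \<ge> k" "\<And>k. \<bar>inner (xs k) (ys (m k))\<bar> \<le> 1/8" by metis
  define f where "f k t = inner ((1-t) *\<^sub>R T (xs k) + t *\<^sub>R T (ys (m k)) - l *\<^sub>R ((1-t) *\<^sub>R xs k + t *\<^sub>R ys (m k)))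
      ((1-t) *\<^sub>R xs k + t *\<^sub>R ys (m k))" for k t
  have "\<exists>t. 0 \<le> t \<and> t \<le> 1 \<and> f k t = 0" for k
  proof (rule IVT')
    show "f k 0 \<le> 0" using xs(2,4)[of k] by (simp add: f_def inner_diff_left dot_square_norm)
    show "0 \<le> f k 1" using ys(2,4)[of "m k"] by (simp add: f_def inner_diff_left dot_square_norm)
    show "continuous_on {0..1} (f k)" unfolding f_def
      by (rule bounded_bilinear.continuous_on[OF bounded_bilinear_inner]) (intro continuous_intros)+
  qed simp
  then obtain t where t: "\<And>k. 0 \<le> t k" "\<And>k. t k \<le> 1" "\<And>k. f k (t k) = 0" by metis
  define v where "v k = (1 - t k) *\<^sub>R xs k + t k *\<^sub>R ys (m k)" for k
  have vD: "v k \<in> D" for k unfolding v_def using xs(1) ys(1) by (intro Dadd Dscale)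
  have Tv: "T (v k) = (1 - t k) *\<^sub>R T (xs k) + t k *\<^sub>R T (ys (m k))" for k
    unfolding v_def using xs(1) ys(1) by (simp add: Tadd Dscale Tscale)
  have qv: "inner (T (v k)) (v k) = l * (norm (v k))\<^sup>2" for k
    using t(3)[of k] unfolding f_def Tv[symmetric] v_def[symmetric]
    by (simp add: inner_diff_left dot_square_norm)
  have vn: "(norm (v k))\<^sup>2 \<ge> 1/4" for k
  proof -
    let ?a = "inner (xs k) (ys (m k))"
    have "(norm (v k))\<^sup>2 = inner (v k) (v k)" by (simp add: dot_square_norm)
    also have "\<dots> = (1 - t k)\<^sup>2 + (t k)\<^sup>2 + 2 * (1 - t k) * t k * ?a"
    proof -
      have hx: "inner (xs k) (xs k) = 1" using xs(2)[of k] by (metis power2_norm_eq_inner one_power2)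
      have hy: "inner (ys (m k)) (ys (m k)) = 1" using ys(2)[of "m k"] by (metis power2_norm_eq_inner one_power2)
      show ?thesis unfolding v_def
        by (simp add: inner_add_left inner_add_right hx hy inner_commute[of "ys (m k)" "xs k"] power2_eq_square algebra_simps)
    qed
    also have "\<dots> \<ge> 1/4"
    proof -
      have c0: "0 \<le> 2 * (1 - t k) * t k" using t(1,2)[of k] by (intro mult_nonneg_nonneg) auto
      have "-1/8 \<le> ?a" using m(2)[of k] by linarith
      then have A: "2 * (1 - t k) * t k * (-1/8) \<le> 2 * (1 - t k) * t k * ?a" by (rule mult_left_mono[OF _ c0])
      have B: "(1 - t k)\<^sup>2 + (t k)\<^sup>2 + 2 * (1 - t k) * t k * (-1/8) - 1/4 = (9/4) * (t k - 1/2)\<^sup>2 + 3/16"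
        by (simp add: power2_eq_square algebra_simps)
      have "0 \<le> (9/4) * (t k - 1/2)\<^sup>2" by simp
      then show ?thesis using A B by linarith
    qed
    finally show ?thesis .
  qed
  have vpos: "norm (v k) \<ge> 1/2" for k
  proof (rule ccontr)
    assume "\<not> ?thesis"
    then have "norm (v k) < 1/2" by simp
    then have "(norm (v k))\<^sup>2 < (1/2)\<^sup>2" by (intro power_strict_mono) auto
    moreover have "(1/2::real)\<^sup>2 = 1/4" by (simp add: power2_eq_square)
    ultimately show False using vn[of k] by linarith
  qed
  have vne: "v k \<noteq> 0" for k using vpos[of k] by (cases "v k = 0") auto
  define z where "z k = (1 / norm (v k)) *\<^sub>R v k" for k
  have zD: "z k \<in> D" for k unfolding z_def using vD by (rule Dscale)
  have zn: "norm (z k) = 1" for k unfolding z_def using vpos[of k] by (cases "v k = 0") auto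
  have qz: "inner (T (z k)) (z k) = l" for k
  proof -
    have "inner (T (z k)) (z k) = (1 / norm (v k))\<^sup>2 * inner (T (v k)) (v k)"
      unfolding z_def by (rule q_scale[OF vD])
    also have "\<dots> = l" using qv[of k] vne[of k] by (simp add: power_divide)
    finally show ?thesis .
  qed
  have "wnull z" unfolding wnull_def
  proof
    fix y
    have lx: "(\<lambda>k. inner (xs k) y) \<longlonglongrightarrow> 0" using xs(3) unfolding wnull_def by blast
    have ly: "(\<lambda>k. inner (ys (m k)) y) \<longlonglongrightarrow> 0"
      using tendsto_ge_index[OF _ m(1)] ys(3) unfolding wnull_def by blast
    have "(\<lambda>k. \<bar>inner (xs k) y\<bar> + \<bar>inner (ys (m k)) y\<bar>) \<longlonglongrightarrow> 0 + 0"
      using lx ly by (intro tendsto_add tendsto_rabs_zero)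
    then have L: "(\<lambda>k. \<bar>inner (xs k) y\<bar> + \<bar>inner (ys (m k)) y\<bar>) \<longlonglongrightarrow> 0" by simp
    have "norm (inner (z k) y) \<le> norm (\<bar>inner (xs k) y\<bar> + \<bar>inner (ys (m k)) y\<bar>) * 2" for k
    proof -
      have "inner (z k) y = (1 / norm (v k)) * ((1 - t k) * inner (xs k) y + t k * inner (ys (m k)) y)"
        unfolding z_def v_def by (simp add: inner_add_left)
      moreover have "\<bar>(1 - t k) * inner (xs k) y + t k * inner (ys (m k)) y\<bar>
          \<le> \<bar>inner (xs k) y\<bar> + \<bar>inner (ys (m k)) y\<bar>"
      proof -
        have "\<bar>(1 - t k) * inner (xs k) y\<bar> \<le> \<bar>inner (xs k) y\<bar>"
          using t(1,2)[of k] by (simp add: abs_mult mult_left_le_one_le)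
        moreover have "\<bar>t k * inner (ys (m k)) y\<bar> \<le> \<bar>inner (ys (m k)) y\<bar>"
          using t(1,2)[of k] by (simp add: abs_mult mult_left_le_one_le)
        ultimately show ?thesis by linarith
      qed
      moreover have "0 < 1 / norm (v k)" using vne[of k] by simp
      moreover have "1 / norm (v k) \<le> 2" using vpos[of k] by (simp add: divide_le_eq)
      ultimately show ?thesis
      proof -
        assume e: "inner (z k) y = (1 / norm (v k)) * ((1 - t k) * inner (xs k) y + t k * inner (ys (m k)) y)"
          and b: "\<bar>(1 - t k) * inner (xs k) y + t k * inner (ys (m k)) y\<bar> \<le> \<bar>inner (xs k) y\<bar> + \<bar>inner (ys (m k)) y\<bar>"
          and c: "0 < 1 / norm (v k)" "1 / norm (v k) \<le> 2"
        have "norm (inner (z k) y) = (1 / norm (v k)) * \<bar>(1 - t k) * inner (xs k) y + t k * inner (ys (m k)) y\<bar>"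
          unfolding e using c(1) by (simp add: abs_mult)
        also have "\<dots> \<le> 2 * (\<bar>inner (xs k) y\<bar> + \<bar>inner (ys (m k)) y\<bar>)"
          using b c by (intro mult_mono) auto
        finally show ?thesis by (simp add: mult.commute)
      qed
    qed
    then show "(\<lambda>k. inner (z k) y) \<longlonglongrightarrow> 0"
      by (intro tendsto_0_le[OF L, where K=2]) (auto intro: always_eventually)
  qed
  then show ?thesis unfolding We_def using zD zn qz by (intro exI[of _ z]) auto
qed

end

definition pr :: "(nat \<Rightarrow> 'a::real_inner) \<Rightarrow> nat \<Rightarrow> 'a \<Rightarrow> 'a" where
  "pr F n u = (\<Sum>i<n. inner u (F i) *\<^sub>R F i)"

lemma orth_eo: "orthonormal_upto F n \<Longrightarrow> i < n \<Longrightarrow> j < n \<Longrightarrow> inner (F i) (F j) = (if i = j then 1 else 0)"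
  unfolding orthonormal_upto_def by (auto simp: dot_square_norm)

lemma pr_perp:
  assumes "orthonormal_upto F n" "j < n"
  shows "inner (u - pr F n u) (F j) = 0"
proof -
  have "inner (pr F n u) (F j) = (\<Sum>i<n. inner u (F i) * (if i = j then 1 else 0))"
    unfolding pr_def by (simp add: inner_sum_left orth_eo[OF assms(1) _ assms(2)])
  also have "\<dots> = inner u (F j)" using assms(2) by (simp add: if_distrib sum.delta cong: if_cong)
  finally show ?thesis by (simp add: inner_diff_left)
qed

lemma pr_orth:
  assumes "\<forall>j<n. inner v (F j) = 0"
  shows "inner (pr F n u) v = 0"
proof -
  have "\<And>i. i<n \<Longrightarrow> inner (F i) v = 0" using assms by (simp add: inner_commute)
  then show ?thesis unfolding pr_def by (auto simp: inner_sum_left intro!: sum.neutral)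
qed

lemma pr_tendsto:
  assumes "\<And>i. i < n \<Longrightarrow> (\<lambda>k. inner (xs k) (F i)) \<longlonglongrightarrow> 0"
  shows "(\<lambda>k. pr F n (xs k)) \<longlonglongrightarrow> 0"
  unfolding pr_def
proof (rule tendsto_null_sum)
  fix i assume "i \<in> {..<n}"
  then have "(\<lambda>k. inner (xs k) (F i) *\<^sub>R F i) \<longlonglongrightarrow> 0 *\<^sub>R F i"
    using assms by (intro tendsto_scaleR tendsto_const) auto
  then show "(\<lambda>k. inner (xs k) (F i) *\<^sub>R F i) \<longlonglongrightarrow> 0" by simp
qed

lemma wnull_pr:
  assumes "wnull xs"
  shows "(\<lambda>k. pr F n (xs k)) \<longlonglongrightarrow> 0"
  using assms unfolding wnull_def by (intro pr_tendsto) auto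

locale bsym = symop UNIV B for B :: "'a::real_inner \<Rightarrow> 'a" +
  fixes K :: real
  assumes Bbnd: "norm (B x) \<le> K * norm x" and K0: "0 \<le> K"
begin

abbreviation q where "q x \<equiv> inner (B x) x"

lemma q_bnd: "\<bar>q x\<bar> \<le> K * (norm x)\<^sup>2"
proof -
  have "\<bar>q x\<bar> \<le> norm (B x) * norm x" by (rule Cauchy_Schwarz_ineq2)
  also have "\<dots> \<le> K * norm x * norm x" using Bbnd by (intro mult_right_mono) auto
  finally show ?thesis by (simp add: power2_eq_square mult.assoc)
qed

lemma We_le_K: "We UNIV B v \<Longrightarrow> v \<le> K"
proof -
  assume "We UNIV B v"
  then obtain xs where xs: "\<And>k. norm (xs k) = 1" "(\<lambda>k. q (xs k)) \<longlonglongrightarrow> v" unfolding We_def by blast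
  have "q (xs k) \<le> K" for k using q_bnd[of "xs k"] xs(1)[of k] by simp
  then show ?thesis using xs(2) by (intro LIMSEQ_le_const2) auto
qed

lemma q_diff:
  assumes "norm (a - b) \<le> 1" "norm b = 1"
  shows "\<bar>q a - q b\<bar> \<le> 3 * K * norm (a - b)"
proof -
  have e: "q a - q b = inner (B a) (a - b) + inner (B (a - b)) b"
    by (simp add: Tdiff inner_diff_left inner_diff_right)
  have na: "norm a \<le> 2" using norm_triangle_ineq2[of a b] assms by simp
  have "\<bar>inner (B a) (a - b)\<bar> \<le> norm (B a) * norm (a - b)" by (rule Cauchy_Schwarz_ineq2)
  also have "\<dots> \<le> (K * 2) * norm (a - b)"
    using Bbnd[of a] na K0 by (intro mult_right_mono) (auto intro: order_trans mult_left_mono)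
  finally have 1: "\<bar>inner (B a) (a - b)\<bar> \<le> 2 * K * norm (a - b)" by simp
  have "\<bar>inner (B (a - b)) b\<bar> \<le> norm (B (a - b)) * norm b" by (rule Cauchy_Schwarz_ineq2)
  also have "\<dots> \<le> K * norm (a - b)" using Bbnd[of "a - b"] assms(2) by simp
  finally have 2: "\<bar>inner (B (a - b)) b\<bar> \<le> K * norm (a - b)" .
  show ?thesis unfolding e using 1 2 by linarith
qed

definition "m = Sup {v. We UNIV B v}"

lemma bddW: "bdd_above {v. We UNIV B v}"
  using We_le_K by (intro bdd_aboveI[where M=K]) auto

lemma We_le_m: "We UNIV B v \<Longrightarrow> v \<le> m"
  unfolding m_def using bddW by (auto intro: cSup_upper)

context
  fixes \<rho> assumes rho: "We UNIV B \<rho>"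
begin

lemma rho_le: "\<rho> \<le> m"
  unfolding m_def using rho bddW by (auto intro: cSup_upper)

lemma step1:
  assumes eps: "\<epsilon> > 0" and E: "orthonormal_upto E n0"
  shows "\<exists>n F. n0 \<le> n \<and> orthonormal_upto F n \<and> (\<forall>i<n0. F i = E i) \<and>
     (\<forall>w. (\<forall>i<n. inner w (F i) = 0) \<longrightarrow> q w \<le> (m + \<epsilon>) * (norm w)\<^sup>2)"
proof (rule ccontr)
  assume H: "\<not> ?thesis"
  let ?R = "\<lambda>i y. (i < n0 \<longrightarrow> y = E i) \<and> (n0 \<le> i \<longrightarrow> m + \<epsilon> \<le> q y)"
  have "\<exists>g. (\<forall>n. ?R n (g n)) \<and> orthonormal_seq g"
  proof (rule ons_seq)
    fix n e assume orth: "orthonormal_upto e n" and Re: "\<forall>i<n. ?R i (e i)"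
    show "\<exists>y. ?R n y \<and> norm y = 1 \<and> (\<forall>i<n. inner y (e i) = 0)"
    proof (cases "n < n0")
      case True
      have "inner (E n) (e i) = 0" if "i < n" for i
        using Re that True orth_eo[OF E, of n i] by auto
      moreover have "norm (E n) = 1" using E True unfolding orthonormal_upto_def by blast
      ultimately show ?thesis using True by (intro exI[of _ "E n"]) auto
    next
      case False
      then have "n0 \<le> n" by simp
      moreover have "\<forall>i<n0. e i = E i" using Re \<open>n0 \<le> n\<close> by auto
      ultimately obtain w where w: "\<forall>i<n. inner w (e i) = 0" "\<not> q w \<le> (m + \<epsilon>) * (norm w)\<^sup>2"
        using H orth by blast
      have wne: "w \<noteq> 0" using w(2) by (auto simp: T0)
      define y where "y = (1 / norm w) *\<^sub>R w"
      have "q y = q w / (norm w)\<^sup>2" unfolding y_def using q_scale[of w "1 / norm w"] by (simp add: power_divide)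
      moreover have "(norm w)\<^sup>2 > 0" using wne by simp
      ultimately have "m + \<epsilon> \<le> q y" using w(2) by (simp add: le_divide_eq)
      moreover have "norm y = 1" using wne by (simp add: y_def)
      moreover have "\<forall>i<n. inner y (e i) = 0" using w(1) by (simp add: y_def)
      ultimately show ?thesis using False by (intro exI[of _ y]) auto
    qed
  qed
  then obtain g where g: "\<And>n. ?R n (g n)" "orthonormal_seq g" by blast
  define h where "h k = g (k + n0)" for k
  have ho: "orthonormal_seq h" using g(2) unfolding orthonormal_seq_def h_def by auto
  have hn: "\<And>k. norm (h k) = 1" using ho unfolding orthonormal_seq_def by blast
  obtain v where v: "m + \<epsilon> \<le> v" "We UNIV B v"
  proof -
    have "\<exists>v. m + \<epsilon> \<le> v \<and> v \<le> K \<and> We UNIV B v"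
    proof (rule We_sub)
      show "wnull h" using ho by (rule wnull_ortho)
      show "m + \<epsilon> \<le> q (h k)" for k using g(1)[of "k + n0"] by (simp add: h_def)
      show "q (h k) \<le> K" for k using q_bnd[of "h k"] hn[of k] by simp
    qed (auto simp: hn)
    then show ?thesis using that by blast
  qed
  then show False using We_le_m[OF v(2)] eps by simp
qed

end
end

context bsym begin
context
  fixes \<rho> assumes rho: "We UNIV B \<rho>"
begin

lemma step2:
  assumes eps: "0 < \<epsilon>" "\<epsilon> \<le> 1" and E: "orthonormal_upto E n0"
  shows "\<exists>z. norm z = 1 \<and> (\<forall>i<n0. inner z (E i) = 0) \<and>
     norm (B z - m *\<^sub>R z) \<le> 2 * (\<epsilon> + sqrt (2 * \<epsilon> * (\<bar>m\<bar> + 1 + K)))"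
proof -
  obtain n F where nF: "n0 \<le> n" "orthonormal_upto F n" "\<forall>i<n0. F i = E i"
    and Fq: "\<And>w. (\<forall>i<n. inner w (F i) = 0) \<Longrightarrow> q w \<le> (m + \<epsilon>) * (norm w)\<^sup>2"
    using step1[OF rho eps(1) E] by blast
  define K' where "K' = \<bar>m\<bar> + 1 + K"
  have K'0: "K' > 0" unfolding K'_def using K0 by simp
  have "m - \<epsilon> < m" using eps by simp
  then have "m - \<epsilon> < Sup {v. We UNIV B v}" by (simp add: m_def)
  then obtain \<rho>' where r': "We UNIV B \<rho>'" "m - \<epsilon> < \<rho>'"
    using less_cSup_iff[of "{v. We UNIV B v}"] bddW rho by blast
  have r'm: "\<rho>' \<le> m" using We_le_m[OF r'(1)] .
  obtain xs where xs: "\<And>k. norm (xs k) = 1" "wnull xs" "(\<lambda>k. q (xs k)) \<longlonglongrightarrow> \<rho>'"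
    using r'(1) unfolding We_def by blast
  define p where "p k = pr F n (xs k)" for k
  define w where "w k = xs k - p k" for k
  have p0: "p \<longlonglongrightarrow> 0" unfolding p_def using wnull_pr[OF xs(2)] by simp
  have wperp: "\<forall>j<n. inner (w k) (F j) = 0" for k
    unfolding w_def p_def using pr_perp[OF nF(2)] by blast
  have ww: "wnull w" unfolding wnull_def
  proof
    fix y
    have "(\<lambda>k. inner (xs k) y - inner (p k) y) \<longlonglongrightarrow> 0 - inner 0 y"
      using xs(2) p0 unfolding wnull_def by (intro tendsto_intros) auto
    then show "(\<lambda>k. inner (w k) y) \<longlonglongrightarrow> 0" by (simp add: w_def inner_diff_left)
  qed
  have nw: "(\<lambda>k. norm (w k)) \<longlonglongrightarrow> 1"
  proof -
    have "norm (norm (w k) - 1) \<le> norm (p k) * 1" for k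
      using norm_triangle_ineq3[of "w k" "xs k"] xs(1)[of k] by (simp add: w_def)
    then have "(\<lambda>k. norm (w k) - 1) \<longlonglongrightarrow> 0"
      by (intro tendsto_0_le[OF p0, where K=1]) (auto intro: always_eventually)
    then show ?thesis by (simp add: LIM_zero_iff)
  qed
  have qw: "(\<lambda>k. q (w k)) \<longlonglongrightarrow> \<rho>'"
  proof -
    have ev: "eventually (\<lambda>k. norm (p k) < 1) sequentially"
      using tendstoD[OF p0, of 1] by (simp add: dist_norm)
    have "eventually (\<lambda>k. norm (q (w k) - q (xs k)) \<le> norm (p k) * (3 * K)) sequentially"
      using ev
    proof eventually_elim
      case (elim k)
      have "\<bar>q (w k) - q (xs k)\<bar> \<le> 3 * K * norm (w k - xs k)"
        using elim xs(1)[of k] by (intro q_diff) (auto simp: w_def)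
      then show ?case by (simp add: w_def mult.commute)
    qed
    then have "(\<lambda>k. q (w k) - q (xs k)) \<longlonglongrightarrow> 0" by (intro tendsto_0_le[OF p0])
    then have "(\<lambda>k. (q (w k) - q (xs k)) + q (xs k)) \<longlonglongrightarrow> 0 + \<rho>'" by (intro tendsto_add xs(3))
    then show ?thesis by simp
  qed
  have pb: "(\<lambda>k. pr F n (B (w k))) \<longlonglongrightarrow> 0"
  proof (rule pr_tendsto)
    fix i assume "i < n"
    have "(\<lambda>k. inner (w k) (B (F i))) \<longlonglongrightarrow> 0" using ww unfolding wnull_def by blast
    then show "(\<lambda>k. inner (B (w k)) (F i)) \<longlonglongrightarrow> 0" by (simp add: sym)
  qed
  define bb where "bb u v = (m + \<epsilon>) * inner u v - inner (B u) v" for u v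
  have bpos: "0 \<le> bb u u" if "\<forall>j<n. inner u (F j) = 0" for u
    using Fq[OF that] unfolding bb_def by (simp add: dot_square_norm)
  have bcs: "(bb u v)\<^sup>2 \<le> bb u u * bb v v"
    if u: "\<forall>j<n. inner u (F j) = 0" and v: "\<forall>j<n. inner v (F j) = 0" for u v
  proof (rule quad_cs)
    fix t
    have "\<forall>j<n. inner (u + t *\<^sub>R v) (F j) = 0" using u v by (simp add: inner_add_left)
    then have "0 \<le> bb (u + t *\<^sub>R v) (u + t *\<^sub>R v)" by (rule bpos)
    also have "bb (u + t *\<^sub>R v) (u + t *\<^sub>R v) = bb u u + 2 * bb u v * t + bb v v * t\<^sup>2"
    proof -
      have s: "inner (B v) u = inner (B u) v" using sym[of u v] by (simp add: inner_commute)
      have e1: "inner (u + t *\<^sub>R v) (u + t *\<^sub>R v) = inner u u + 2*t*inner u v + t\<^sup>2*inner v v"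
        by (simp add: inner_add_left inner_add_right inner_commute[of v u] power2_eq_square algebra_simps)
      have e2: "inner (B (u + t *\<^sub>R v)) (u + t *\<^sub>R v) = inner (B u) u + 2*t*inner (B u) v + t\<^sup>2*inner (B v) v"
        by (simp add: Tadd Tscale inner_add_left inner_add_right s power2_eq_square algebra_simps)
      show ?thesis unfolding bb_def e1 e2 by (simp add: algebra_simps)
    qed
    finally show "0 \<le> bb u u + 2 * bb u v * t + bb v v * t\<^sup>2" .
  qed
  have key: "norm (B u - m *\<^sub>R u) \<le> \<epsilon> * norm u + sqrt (K' * bb u u) + norm (pr F n (B u))"
    if u: "\<forall>j<n. inner u (F j) = 0" for u
  proof -
    define N where "N = (m + \<epsilon>) *\<^sub>R u - (B u - pr F n (B u))"
    have Np: "\<forall>j<n. inner N (F j) = 0"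
      using u pr_perp[OF nF(2), of _ "B u"] by (simp add: N_def inner_diff_left)
    have bN: "bb u N = inner N N"
    proof -
      have "inner (B u) N = inner (B u - pr F n (B u)) N + inner (pr F n (B u)) N"
        by (simp add: inner_diff_left)
      also have "inner (pr F n (B u)) N = 0" using pr_orth[OF Np] .
      finally have "inner (B u) N = inner (B u - pr F n (B u)) N" by simp
      then show ?thesis unfolding bb_def N_def by (simp add: inner_diff_left)
    qed
    have bNN: "bb N N \<le> K' * (norm N)\<^sup>2"
    proof -
      have "- q N \<le> K * (norm N)\<^sup>2" using q_bnd[of N] by linarith
      moreover have "(m + \<epsilon>) * (norm N)\<^sup>2 \<le> (\<bar>m\<bar> + 1) * (norm N)\<^sup>2"
        using eps by (intro mult_right_mono) auto
      ultimately show ?thesis unfolding bb_def K'_def by (simp add: dot_square_norm algebra_simps)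
    qed
    have b0: "0 \<le> bb u u" using bpos[OF u] .
    have "(inner N N)\<^sup>2 \<le> bb u u * bb N N" using bcs[OF u Np] bN by simp
    also have "\<dots> \<le> bb u u * (K' * (norm N)\<^sup>2)" using b0 bNN by (rule mult_left_mono[rotated])
    finally have *: "((norm N)\<^sup>2)\<^sup>2 \<le> (K' * bb u u) * (norm N)\<^sup>2" by (simp add: dot_square_norm algebra_simps)
    have "(norm N)\<^sup>2 \<le> K' * bb u u"
    proof (cases "norm N = 0")
      case True then show ?thesis using b0 K'0 by simp
    next
      case False
      then have "(norm N)\<^sup>2 > 0" by simp
      then show ?thesis using * by (simp add: power2_eq_square mult_le_cancel_right)
    qed
    then have nN: "norm N \<le> sqrt (K' * bb u u)" by (rule real_le_rsqrt)
    have eq: "B u - m *\<^sub>R u = \<epsilon> *\<^sub>R u - N + pr F n (B u)" unfolding N_def by (simp add: algebra_simps)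
    have "norm (B u - m *\<^sub>R u) = norm (\<epsilon> *\<^sub>R u - N + pr F n (B u))" by (simp only: eq)
    moreover have "norm (\<epsilon> *\<^sub>R u - N + pr F n (B u)) \<le> norm (\<epsilon> *\<^sub>R u - N) + norm (pr F n (B u))"
      by (rule norm_triangle_ineq)
    moreover have "norm (\<epsilon> *\<^sub>R u - N) \<le> norm (\<epsilon> *\<^sub>R u) + norm N" by (rule norm_triangle_ineq4)
    ultimately have "norm (B u - m *\<^sub>R u) \<le> norm (\<epsilon> *\<^sub>R u) + norm N + norm (pr F n (B u))"
      by linarith
    then show ?thesis using nN eps by simp
  qed
  define r where "r k = \<epsilon> * norm (w k) + sqrt (K' * bb (w k) (w k)) + norm (pr F n (B (w k)))" for k
  have bbw: "(\<lambda>k. bb (w k) (w k)) \<longlonglongrightarrow> (m + \<epsilon>) * 1\<^sup>2 - \<rho>'"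
  proof -
    have "(\<lambda>k. (m+\<epsilon>) * (norm (w k))\<^sup>2 - q (w k)) \<longlonglongrightarrow> (m + \<epsilon>) * 1\<^sup>2 - \<rho>'"
      by (intro tendsto_intros nw qw)
    moreover have "bb (w k) (w k) = (m+\<epsilon>) * (norm (w k))\<^sup>2 - q (w k)" for k
      by (simp add: bb_def dot_square_norm)
    ultimately show ?thesis by simp
  qed
  have rl: "r \<longlonglongrightarrow> \<epsilon> * 1 + sqrt (K' * ((m + \<epsilon>) * 1\<^sup>2 - \<rho>')) + norm (0::'a)"
    unfolding r_def using nw bbw pb by (intro tendsto_intros)
  define tgt where "tgt = \<epsilon> + sqrt (2 * \<epsilon> * K')"
  have "K' * ((m + \<epsilon>) * 1\<^sup>2 - \<rho>') < K' * (2 * \<epsilon>)" using r'(2) K'0 by simp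
  then have "sqrt (K' * ((m + \<epsilon>) * 1\<^sup>2 - \<rho>')) < sqrt (2 * \<epsilon> * K')"
    by (simp add: mult.commute mult.left_commute)
  then have Ll: "\<epsilon> * 1 + sqrt (K' * ((m + \<epsilon>) * 1\<^sup>2 - \<rho>')) + norm (0::'a) < tgt" unfolding tgt_def by simp
  have "eventually (\<lambda>k. r k < tgt \<and> 1/2 < norm (w k)) sequentially"
    using order_tendstoD(2)[OF rl Ll] order_tendstoD(1)[OF nw, of "1/2"] by (auto intro: eventually_conj)
  then obtain k where k: "r k < tgt" "1/2 < norm (w k)" unfolding eventually_sequentially by blast
  have tgt0: "0 \<le> tgt" unfolding tgt_def using eps K'0 by simp
  define z where "z = (1 / norm (w k)) *\<^sub>R w k"
  have wk0: "norm (w k) > 0" using k(2) by (cases "w k = 0") auto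
  have "norm z = 1" using wk0 by (simp add: z_def)
  moreover have "\<forall>i<n0. inner z (E i) = 0"
  proof (intro allI impI)
    fix i assume i: "i < n0"
    then have "F i = E i" "i < n" using nF(1,3) by auto
    then have "inner (w k) (E i) = 0" using wperp[of k] by metis
    then show "inner z (E i) = 0" by (simp add: z_def)
  qed
  moreover have "norm (B z - m *\<^sub>R z) \<le> 2 * tgt"
  proof -
    have "B z - m *\<^sub>R z = (1 / norm (w k)) *\<^sub>R (B (w k) - m *\<^sub>R w k)"
      by (simp add: z_def Tscale algebra_simps)
    then have "norm (B z - m *\<^sub>R z) = norm (B (w k) - m *\<^sub>R w k) / norm (w k)" using wk0 by simp
    also have "\<dots> \<le> r k / norm (w k)" unfolding r_def using key[OF wperp[of k]] wk0
      by (intro divide_right_mono) auto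
    also have "\<dots> \<le> tgt / (1/2)"
      using k wk0 tgt0 by (intro frac_le) (auto simp: r_def)
    finally show ?thesis by simp
  qed
  ultimately show ?thesis unfolding tgt_def K'_def by (intro exI[of _ z]) auto
qed

lemma BC: "Se UNIV B m"
proof -
  define K' where "K' = \<bar>m\<bar> + 1 + K"
  define e where "e n = inverse (real (Suc n))" for n
  define \<eta> where "\<eta> n = 2 * (e n + sqrt (2 * e n * K'))" for n
  have "\<exists>g. (\<forall>n. norm (B (g n) - m *\<^sub>R g n) \<le> \<eta> n) \<and> orthonormal_seq g"
  proof (rule ons_seq)
    fix n and E :: "nat \<Rightarrow> 'a" assume o: "orthonormal_upto E n"
    have e1: "0 < e n" by (auto simp: e_def)
    have e2: "e n \<le> 1" by (simp add: e_def inverse_le_1_iff)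
    obtain z where z: "norm z = 1" "\<forall>i<n. inner z (E i) = 0"
       "norm (B z - m *\<^sub>R z) \<le> 2 * (e n + sqrt (2 * e n * (\<bar>m\<bar> + 1 + K)))"
      using step2[OF e1 e2 o] by (elim exE conjE) blast
    show "\<exists>y. norm (B y - m *\<^sub>R y) \<le> \<eta> n \<and> norm y = 1 \<and> (\<forall>i<n. inner y (E i) = 0)"
      using z unfolding \<eta>_def K'_def by (intro exI[of _ z]) simp
  qed
  then obtain g where g: "\<And>n. norm (B (g n) - m *\<^sub>R g n) \<le> \<eta> n" "orthonormal_seq g" by blast
  have e0: "e \<longlonglongrightarrow> 0" unfolding e_def by (rule LIMSEQ_inverse_real_of_nat)
  have "\<eta> \<longlonglongrightarrow> 2 * (0 + sqrt (2 * 0 * K'))" unfolding \<eta>_def by (intro tendsto_intros e0)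
  moreover have "2 * (0 + sqrt (2 * 0 * K')) = (0::real)" by simp
  ultimately have eta0: "\<eta> \<longlonglongrightarrow> 0" by metis
  have ev1: "eventually (\<lambda>n. (0::real) \<le> norm (B (g n) - m *\<^sub>R g n)) sequentially"
    by (rule always_eventually) simp
  have ev2: "eventually (\<lambda>n. norm (B (g n) - m *\<^sub>R g n) \<le> \<eta> n) sequentially"
    by (rule always_eventually) (use g(1) in blast)
  have "(\<lambda>n. norm (B (g n) - m *\<^sub>R g n)) \<longlonglongrightarrow> 0"
    by (rule tendsto_sandwich[OF ev1 ev2 tendsto_const eta0])
  moreover have "\<forall>k. g k \<in> UNIV \<and> norm (g k) = 1" using g(2) unfolding orthonormal_seq_def by simp
  moreover have "wnull g" using g(2) by (rule wnull_ortho)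
  ultimately show ?thesis unfolding Se_def by (intro exI[of _ g] conjI)
qed

end
end

lemma parallelogram:
  fixes a b :: "'a::real_inner"
  shows "(norm (a - b))\<^sup>2 + (norm (a + b))\<^sup>2 = 2 * (norm a)\<^sup>2 + 2 * (norm b)\<^sup>2"
  by (simp add: dot_square_norm[symmetric] inner_add_left inner_add_right inner_diff_left inner_diff_right inner_commute)

lemma proj_exists:
  fixes V :: "'a::{real_inner, complete_space} set"
  assumes V0: "0 \<in> V" and Vadd: "\<And>u v. u \<in> V \<Longrightarrow> v \<in> V \<Longrightarrow> u + v \<in> V"
    and Vscale: "\<And>c v. v \<in> V \<Longrightarrow> c *\<^sub>R v \<in> V"
    and Vclosed: "\<And>X l. (\<And>n. X n \<in> V) \<Longrightarrow> X \<longlonglongrightarrow> l \<Longrightarrow> l \<in> V"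
  shows "\<exists>v\<in>V. \<forall>w\<in>V. inner (y - v) w = 0"
proof -
  define S where "S = (\<lambda>v. norm (y - v)) ` V"
  define d where "d = Inf S"
  have Sne: "S \<noteq> {}" using V0 by (auto simp: S_def)
  have Sbdd: "bdd_below S" unfolding S_def by (intro bdd_belowI[where m=0]) auto
  have dle: "d \<le> norm (y - w)" if "w \<in> V" for w
    unfolding d_def using that Sbdd by (auto simp: S_def intro!: cInf_lower)
  have d0: "0 \<le> d" using dle[OF V0] V0 unfolding d_def S_def
    using Sne Sbdd by (auto intro!: cInf_greatest)
  define e where "e n = inverse (real (Suc n))" for n
  have e0: "\<And>n. 0 < e n" by (simp add: e_def)
  have emono: "\<And>n m. n \<le> m \<Longrightarrow> e m \<le> e n"
    by (simp add: e_def le_imp_inverse_le)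
  have "\<exists>v\<in>V. norm (y - v) < d + e n" for n
  proof -
    have "Inf S < d + e n" using e0[of n] by (simp add: d_def)
    then show ?thesis using cInf_less_iff[OF Sne Sbdd] by (auto simp: S_def)
  qed
  then obtain X where X: "\<And>n. X n \<in> V" "\<And>n. norm (y - X n) < d + e n" by metis
  have par: "(norm (X m - X n))\<^sup>2 \<le> 8 * d * e N + 4 * (e N)\<^sup>2" if "N \<le> n" "N \<le> m" for n m N
  proof -
    have mid: "(1/2) *\<^sub>R (X n + X m) \<in> V" using X(1) by (intro Vscale Vadd)
    have "2 * d \<le> 2 * norm (y - (1/2) *\<^sub>R (X n + X m))" using dle[OF mid] by simp
    also have "2 * norm (y - (1/2) *\<^sub>R (X n + X m)) = norm ((y - X n) + (y - X m))"
    proof -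
      have "(y - X n) + (y - X m) = 2 *\<^sub>R (y - (1/2) *\<^sub>R (X n + X m))" by (simp add: algebra_simps scaleR_2)
      then show ?thesis by simp
    qed
    finally have h1: "2 * d \<le> norm ((y - X n) + (y - X m))" .
    have h2: "(2 * d)\<^sup>2 \<le> (norm ((y - X n) + (y - X m)))\<^sup>2" using h1 d0 by (intro power_mono) auto
    have a: "norm (y - X n) \<le> d + e N" using X(2)[of n] emono[OF that(1)] by linarith
    have b: "norm (y - X m) \<le> d + e N" using X(2)[of m] emono[OF that(2)] by linarith
    have a2: "(norm (y - X n))\<^sup>2 \<le> (d + e N)\<^sup>2" using a by (intro power_mono) auto
    have b2: "(norm (y - X m))\<^sup>2 \<le> (d + e N)\<^sup>2" using b by (intro power_mono) auto
    have "(norm (X m - X n))\<^sup>2 + (norm ((y - X n) + (y - X m)))\<^sup>2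
        = 2 * (norm (y - X n))\<^sup>2 + 2 * (norm (y - X m))\<^sup>2"
      using parallelogram[of "y - X n" "y - X m"] by simp
    then have "(norm (X m - X n))\<^sup>2 \<le> 4 * (d + e N)\<^sup>2 - (2 * d)\<^sup>2" using h2 a2 b2 by linarith
    also have "\<dots> = 8 * d * e N + 4 * (e N)\<^sup>2" by (simp add: power2_eq_square algebra_simps)
    finally show ?thesis .
  qed
  have elim: "(\<lambda>N. 8 * d * e N + 4 * (e N)\<^sup>2) \<longlonglongrightarrow> 8 * d * 0 + 4 * 0\<^sup>2"
    unfolding e_def by (intro tendsto_intros LIMSEQ_inverse_real_of_nat)
  have "Cauchy X"
  proof (rule CauchyI)
    fix \<epsilon> :: real assume "0 < \<epsilon>"
    then have "0 < \<epsilon>\<^sup>2" by simp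
    then have "eventually (\<lambda>N. 8 * d * e N + 4 * (e N)\<^sup>2 < \<epsilon>\<^sup>2) sequentially"
      using order_tendstoD(2)[OF elim] by simp
    then obtain N where N: "8 * d * e N + 4 * (e N)\<^sup>2 < \<epsilon>\<^sup>2" unfolding eventually_sequentially by blast
    have "norm (X m - X n) < \<epsilon>" if "N \<le> m" "N \<le> n" for m n
    proof -
      have "(norm (X m - X n))\<^sup>2 < \<epsilon>\<^sup>2" using par[OF that(2) that(1)] N by linarith
      then show ?thesis using \<open>0 < \<epsilon>\<close> by (simp add: power_less_imp_less_base)
    qed
    then show "\<exists>M. \<forall>m\<ge>M. \<forall>n\<ge>M. norm (X m - X n) < \<epsilon>" by blast
  qed
  then obtain v where v: "X \<longlonglongrightarrow> v" using Cauchy_convergent_iff convergent_def by blast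
  have vV: "v \<in> V" using Vclosed[OF X(1) v] .
  have nv: "norm (y - v) \<le> d"
  proof -
    have "(\<lambda>n. norm (y - X n)) \<longlonglongrightarrow> norm (y - v)" using v by (intro tendsto_intros)
    moreover have "(\<lambda>n. d + e n) \<longlonglongrightarrow> d + 0" unfolding e_def by (intro tendsto_intros LIMSEQ_inverse_real_of_nat)
    ultimately show ?thesis using X(2) by (intro tendsto_le[OF _ _ _ always_eventually]) (auto intro: less_imp_le)
  qed
  have "inner (y - v) w = 0" if w: "w \<in> V" for w
  proof -
    have "(- inner (y - v) w)\<^sup>2 \<le> 0 * (norm w)\<^sup>2"
    proof (rule quad_cs)
      fix t
      have vt: "v + t *\<^sub>R w \<in> V" using vV w by (intro Vadd Vscale)
      have "(norm (y - v))\<^sup>2 \<le> (norm (y - (v + t *\<^sub>R w)))\<^sup>2"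
        using nv dle[OF vt] by (intro power_mono) auto
      also have "(norm (y - (v + t *\<^sub>R w)))\<^sup>2 = (norm (y - v))\<^sup>2 - 2 * t * inner (y - v) w + (t * t) * (norm w)\<^sup>2"
      proof -
        have "y - (v + t *\<^sub>R w) = (y - v) - t *\<^sub>R w" by simp
        then show ?thesis
          by (simp only: power2_norm_eq_inner inner_diff_left inner_diff_right inner_scaleR_left
              inner_scaleR_right inner_commute[of w "y - v"]) (simp add: algebra_simps inner_commute)
      qed
      finally show "0 \<le> 0 + 2 * (- inner (y - v) w) * t + (norm w)\<^sup>2 * t\<^sup>2"
        by (simp add: algebra_simps power2_eq_square)
    qed
    then show ?thesis by simp
  qed
  then show ?thesis using vV by blast
qed

locale sa = symop D T for D :: "'a::{real_inner, complete_space} set" and T +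
  assumes dense: "\<And>x e. e > 0 \<Longrightarrow> \<exists>d\<in>D. norm (x - d) < e"
    and adj: "\<And>y z. (\<forall>x\<in>D. inner (T x) y = inner x z) \<Longrightarrow> y \<in> D"
begin

lemma dense_zero:
  assumes "\<forall>x\<in>D. inner x v = 0" shows "v = 0"
proof (rule ccontr)
  assume "v \<noteq> 0"
  then have nv: "norm v > 0" by simp
  obtain d where d: "d \<in> D" "norm (v - d) < norm v / 2" using dense[of "norm v / 2" v] nv by auto
  have "(norm v)\<^sup>2 = inner v v" by (simp add: dot_square_norm)
  also have "\<dots> = inner (v - d) v" using assms d(1) by (simp add: inner_diff_left)
  also have "\<dots> \<le> norm (v - d) * norm v" by (rule real_inner_class.Cauchy_Schwarz_ineq2[THEN abs_le_D1])
  also have "\<dots> \<le> norm v / 2 * norm v" using d(2) nv by (intro mult_right_mono) auto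
  finally have "norm v * norm v \<le> norm v / 2 * norm v" by (simp add: power2_eq_square)
  moreover have "norm v / 2 * norm v < norm v * norm v" using nv by simp
  ultimately show False by linarith
qed

lemma adj_eq:
  assumes "\<forall>x\<in>D. inner (T x) y = inner x z"
  shows "y \<in> D" "T y = z"
proof -
  show yD: "y \<in> D" using adj[OF assms] .
  have "\<forall>x\<in>D. inner x (T y - z) = 0"
    using assms sym[OF _ yD] by (simp add: inner_diff_right)
  then have "T y - z = 0" by (intro dense_zero) (simp add: inner_commute)
  then show "T y = z" by simp
qed

end

context symop begin

lemma shift_seq:
  assumes "\<And>k. xs k \<in> D" "\<And>k. norm (xs k) = 1" "wnull xs" "eventually (\<lambda>k. P (xs k)) sequentially"
  shows "\<exists>ys. (\<forall>k. ys k \<in> D) \<and> (\<forall>k. norm (ys k) = 1) \<and> wnull ys \<and> (\<forall>k. P (ys k))"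
proof -
  obtain N where N: "\<And>k. k \<ge> N \<Longrightarrow> P (xs k)" using assms(4) unfolding eventually_sequentially by blast
  show ?thesis using assms(1,2) wnull_shift[OF assms(3), of N] N
    by (intro exI[of _ "\<lambda>k. xs (k + N)"]) auto
qed

lemma Se_norm:
  assumes x: "\<And>k. x k \<in> D" "wnull x" and d: "0 < \<delta>" "eventually (\<lambda>k. \<delta> \<le> norm (x k)) sequentially"
    and lim: "(\<lambda>k. norm (T (x k) - b *\<^sub>R x k)) \<longlonglongrightarrow> 0"
  shows "Se D T b"
proof -
  obtain N where N: "\<And>k. k \<ge> N \<Longrightarrow> \<delta> \<le> norm (x k)" using d(2) unfolding eventually_sequentially by blast
  define y where "y k = x (k + N)" for k
  have yd: "\<delta> \<le> norm (y k)" for k using N[of "k + N"] by (simp add: y_def)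
  have yne: "norm (y k) > 0" for k using yd[of k] d(1) by linarith
  define z where "z k = (1 / norm (y k)) *\<^sub>R y k" for k
  have zD: "z k \<in> D" for k unfolding z_def y_def using x(1) by (rule Dscale)
  have zn: "norm (z k) = 1" for k unfolding z_def using yne[of k] by simp
  have ib: "1 / norm (y k) \<le> 1 / \<delta>" for k using yd[of k] d(1) yne[of k] by (intro divide_left_mono) auto
  have "wnull z" unfolding wnull_def
  proof
    fix v
    have L: "(\<lambda>k. inner (y k) v) \<longlonglongrightarrow> 0" using wnull_shift[OF x(2), of N] unfolding wnull_def y_def by blast
    have "norm (inner (z k) v) \<le> norm (inner (y k) v) * (1 / \<delta>)" for k
    proof -
      have "norm (inner (z k) v) = norm (inner (y k) v) * (1 / norm (y k))"
        unfolding z_def using yne[of k] by (simp add: abs_mult)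
      also have "\<dots> \<le> norm (inner (y k) v) * (1 / \<delta>)" by (rule mult_left_mono[OF ib]) simp
      finally show ?thesis .
    qed
    then show "(\<lambda>k. inner (z k) v) \<longlonglongrightarrow> 0" by (intro tendsto_0_le[OF L, where K="1/\<delta>"]) (auto intro: always_eventually)
  qed
  moreover have "(\<lambda>k. norm (T (z k) - b *\<^sub>R z k)) \<longlonglongrightarrow> 0"
  proof -
    have L: "(\<lambda>k. norm (T (y k) - b *\<^sub>R y k)) \<longlonglongrightarrow> 0"
      using LIMSEQ_ignore_initial_segment[OF lim, of N] by (simp add: y_def)
    have "T (z k) - b *\<^sub>R z k = (1 / norm (y k)) *\<^sub>R (T (y k) - b *\<^sub>R y k)" for k
      unfolding z_def using x(1)[of "k + N"] by (simp add: Tscale y_def algebra_simps)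
    then have "norm (norm (T (z k) - b *\<^sub>R z k)) \<le> norm (norm (T (y k) - b *\<^sub>R y k)) * (1 / \<delta>)" for k
    proof -
      assume e: "\<And>k. T (z k) - b *\<^sub>R z k = (1 / norm (y k)) *\<^sub>R (T (y k) - b *\<^sub>R y k)"
      have "norm (norm (T (z k) - b *\<^sub>R z k)) = norm (T (y k) - b *\<^sub>R y k) * (1 / norm (y k))"
        unfolding e using yne[of k] by simp
      also have "\<dots> \<le> norm (T (y k) - b *\<^sub>R y k) * (1 / \<delta>)" by (rule mult_left_mono[OF ib]) simp
      finally show ?thesis by simp
    qed
    then show ?thesis by (intro tendsto_0_le[OF L, where K="1/\<delta>"]) (auto intro: always_eventually)
  qed
  ultimately show ?thesis unfolding Se_def using zD zn by (intro exI[of _ z]) auto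
qed

end

context sa begin

lemma U1:
  assumes ba: "bdd_ab D T" and wl: "We D T l"
  shows "\<exists>b\<ge>l. Se D T b"
proof -
  obtain C where C: "\<And>x. x \<in> D \<Longrightarrow> inner (T x) x \<le> C * (norm x)\<^sup>2" using ba unfolding bdd_ab_def by blast
  obtain xs where xs: "\<And>k. xs k \<in> D" "\<And>k. norm (xs k) = 1" "wnull xs"
    "(\<lambda>k. inner (T (xs k)) (xs k)) \<longlonglongrightarrow> l" using wl unfolding We_def by blast
  have lC: "l \<le> C" using xs(4) C[OF xs(1)] xs(2) by (intro LIMSEQ_le_const2) auto
  define \<mu> where "\<mu> = C + 1"
  define s where "s x = \<mu> *\<^sub>R x - T x" for x
  have sD: "x \<in> D \<Longrightarrow> s x \<in> D \<or> True" for x by simp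
  have spos: "(norm x)\<^sup>2 \<le> inner (s x) x" if "x \<in> D" for x
    using C[OF that] by (simp add: s_def inner_diff_left dot_square_norm \<mu>_def algebra_simps)
  have sbd: "norm x \<le> norm (s x)" if "x \<in> D" for x
  proof (cases "x = 0")
    case True then show ?thesis by simp
  next
    case False
    have "norm x * norm x \<le> norm (s x) * norm x"
      using spos[OF that] Cauchy_Schwarz_ineq2[of "s x" x] by (simp add: power2_eq_square)
    then show ?thesis using False by simp
  qed
  have sadd: "s (x + y) = s x + s y" if "x \<in> D" "y \<in> D" for x y
    using that by (simp add: s_def Tadd algebra_simps)
  have sscale: "s (c *\<^sub>R x) = c *\<^sub>R s x" if "x \<in> D" for x c
    using that by (simp add: s_def Tscale algebra_simps)
  have sdiff: "s (x - y) = s x - s y" if "x \<in> D" "y \<in> D" for x y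
    using that by (simp add: s_def Tdiff algebra_simps)
  have sinj: "x = y" if "x \<in> D" "y \<in> D" "s x = s y" for x y
    using sbd[OF Ddiff[OF that(1,2)]] sdiff[OF that(1,2)] that(3) by simp
  have ssym: "inner (s u) v = inner (s v) u" if "u \<in> D" "v \<in> D" for u v
  proof -
    have e: "inner (T u) v = inner (T v) u" using sym[OF that] by (simp add: inner_commute)
    show ?thesis by (simp add: s_def inner_diff_left e inner_commute[of v u])
  qed
  have ssurj: "\<exists>x\<in>D. s x = y" for y
  proof -
    have "\<exists>v\<in>s ` D. \<forall>w\<in>s ` D. inner (y - v) w = 0"
    proof (rule proj_exists)
      show "0 \<in> s ` D"
      proof -
        have "s 0 = 0" by (simp add: s_def T0)
        then show ?thesis using D0 by (metis image_eqI)
      qed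
      show "u + v \<in> s ` D" if uv: "u \<in> s ` D" "v \<in> s ` D" for u v
      proof -
        obtain a b where "a \<in> D" "b \<in> D" "u = s a" "v = s b" using uv by blast
        then show ?thesis using sadd[of a b] Dadd[of a b] by (metis image_eqI)
      qed
      show "c *\<^sub>R v \<in> s ` D" if vv: "v \<in> s ` D" for c v
      proof -
        obtain a where "a \<in> D" "v = s a" using vv by blast
        then show ?thesis using sscale[of a c] Dscale[of a c] by (metis image_eqI)
      qed
      show "l' \<in> s ` D" if X: "\<And>n. X n \<in> s ` D" and Xl: "X \<longlonglongrightarrow> l'" for X l'
      proof -
        have "\<forall>n. \<exists>x. x \<in> D \<and> s x = X n" using X by (metis imageE)
        then obtain x where x: "\<And>n. x n \<in> D" "\<And>n. s (x n) = X n" by metis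
        have "Cauchy X" using Xl by (rule LIMSEQ_imp_Cauchy)
        have "Cauchy x"
        proof (rule CauchyI)
          fix e :: real assume "0 < e"
          then obtain M where M: "\<And>m n. m \<ge> M \<Longrightarrow> n \<ge> M \<Longrightarrow> norm (X m - X n) < e"
            using CauchyD[OF \<open>Cauchy X\<close>] by blast
          have "norm (x m - x n) < e" if "m \<ge> M" "n \<ge> M" for m n
            using sbd[OF Ddiff[OF x(1) x(1)], of m n] sdiff[OF x(1) x(1), of m n] x(2) M[OF that] by simp
          then show "\<exists>M. \<forall>m\<ge>M. \<forall>n\<ge>M. norm (x m - x n) < e" by blast
        qed
        then obtain x0 where x0: "x \<longlonglongrightarrow> x0" using Cauchy_convergent_iff convergent_def by blast
        have "\<forall>z\<in>D. inner (T z) x0 = inner z (\<mu> *\<^sub>R x0 - l')"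
        proof
          fix z assume z: "z \<in> D"
          have 1: "(\<lambda>n. inner (T z) (x n)) \<longlonglongrightarrow> inner (T z) x0" using x0 by (intro tendsto_intros)
          have "(\<lambda>n. inner z (\<mu> *\<^sub>R x n - X n)) \<longlonglongrightarrow> inner z (\<mu> *\<^sub>R x0 - l')"
            using x0 Xl by (intro tendsto_intros)
          moreover have "inner z (\<mu> *\<^sub>R x n - X n) = inner (T z) (x n)" for n
          proof -
            have "X n = \<mu> *\<^sub>R x n - T (x n)" using x(2)[of n] by (simp add: s_def)
            then have "\<mu> *\<^sub>R x n - X n = T (x n)" by simp
            then show ?thesis using sym[OF z x(1)[of n]] by simp
          qed
          ultimately have 2: "(\<lambda>n. inner (T z) (x n)) \<longlonglongrightarrow> inner z (\<mu> *\<^sub>R x0 - l')" by simp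
          show "inner (T z) x0 = inner z (\<mu> *\<^sub>R x0 - l')" using LIMSEQ_unique[OF 1 2] .
        qed
        then have "x0 \<in> D" "T x0 = \<mu> *\<^sub>R x0 - l'" using adj_eq by blast+
        then have "x0 \<in> D" "s x0 = l'" by (auto simp: s_def)
        then show ?thesis by (metis image_eqI)
      qed
    qed
    then obtain v where v: "v \<in> s ` D" "\<And>w. w \<in> s ` D \<Longrightarrow> inner (y - v) w = 0" by blast
    define r where "r = y - v"
    have "\<forall>z\<in>D. inner (T z) r = inner z (\<mu> *\<^sub>R r)"
    proof
      fix z assume z: "z \<in> D"
      have "inner (s z) r = 0" using v(2)[of "s z"] z by (simp add: r_def inner_commute)
      then show "inner (T z) r = inner z (\<mu> *\<^sub>R r)" by (simp add: s_def inner_diff_left)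
    qed
    then have rD: "r \<in> D" and Tr: "T r = \<mu> *\<^sub>R r" using adj_eq by blast+
    have "s r = 0" using Tr by (simp add: s_def)
    then have "r = 0" using sbd[OF rD] by simp
    then show ?thesis using v(1) by (auto simp: r_def)
  qed
  define R where "R y = (SOME x. x \<in> D \<and> s x = y)" for y
  have RD: "R y \<in> D" and sR: "s (R y) = y" for y
    using someI_ex[OF ssurj[of y, unfolded Bex_def]] by (auto simp: R_def)
  have Radd: "R (a + b) = R a + R b" for a b
    using sinj[OF RD Dadd[OF RD RD]] sR sadd[OF RD RD] by metis
  have Rscale: "R (c *\<^sub>R a) = c *\<^sub>R R a" for c a
    using sinj[OF RD Dscale[OF RD]] sR sscale[OF RD] by metis
  have Rbd: "norm (R y) \<le> norm y" for y using sbd[OF RD] sR by simp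
  have Rsym: "inner (R a) b = inner a (R b)" for a b
    using ssym[OF RD RD, of b a] sR by (simp add: inner_commute)
  interpret RB: bsym R 1
    by unfold_locales (auto simp: Radd Rscale Rsym intro: Rbd)
  have jen: "1 \<le> inner (R x) x * inner (s x) x" if x: "x \<in> D" "norm x = 1" for x
  proof -
    define y where "y = R x"
    have yD: "y \<in> D" and sy: "s y = x" using RD sR by (auto simp: y_def)
    have "(inner (s y) x)\<^sup>2 \<le> inner (s y) y * inner (s x) x"
    proof (rule quad_cs)
      fix t
      have ytx: "y + t *\<^sub>R x \<in> D" using yD x(1) by (intro Dadd Dscale)
      have "0 \<le> inner (s (y + t *\<^sub>R x)) (y + t *\<^sub>R x)" using spos[OF ytx] by (rule order_trans[rotated]) simp
      also have "\<dots> = inner (s y) y + 2 * inner (s y) x * t + inner (s x) x * t\<^sup>2"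
        using ssym[OF yD x(1)] sadd[OF yD Dscale[OF x(1)]] sscale[OF x(1)]
        by (simp add: inner_add_left inner_add_right power2_eq_square algebra_simps)
      finally show "0 \<le> inner (s y) y + 2 * inner (s y) x * t + inner (s x) x * t\<^sup>2" .
    qed
    moreover have "inner (s y) x = 1" using sy x(2) by (simp add: dot_square_norm)
    moreover have "inner (s y) y = inner (R x) x" using sy by (simp add: y_def inner_commute)
    ultimately show ?thesis by simp
  qed
  define a where "a k = inner (R (xs k)) (xs k)" for k
  have sxs: "inner (s (xs k)) (xs k) = \<mu> - inner (T (xs k)) (xs k)" for k
    using xs(2)[of k] by (simp add: s_def inner_diff_left dot_square_norm)
  have spos1: "1 \<le> inner (s (xs k)) (xs k)" for k using spos[OF xs(1)] xs(2) by simp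
  have alow: "1 / inner (s (xs k)) (xs k) \<le> a k" for k
    using jen[OF xs(1,2)] spos1[of k] unfolding a_def by (simp add: divide_le_eq mult.commute)
  have a01: "0 \<le> a k" "a k \<le> 1" for k
  proof -
    show "0 \<le> a k" using alow[of k] spos1[of k] by (smt (verit) divide_pos_pos)
    show "a k \<le> 1" using RB.q_bnd[of "xs k"] xs(2)[of k] by (simp add: a_def)
  qed
  obtain f where f: "strict_mono f" "monoseq (\<lambda>n. a (f n))" using seq_monosub by blast
  have "Bseq (\<lambda>n. a (f n))" using a01 by (intro BseqI'[where K=1]) auto
  then obtain v where v: "(\<lambda>n. a (f n)) \<longlonglongrightarrow> v"
    using f(2) Bseq_monoseq_convergent convergent_def by blast
  have WeR: "We UNIV R v"
    unfolding We_def using xs(2) v wnull_subseq[OF xs(3) f(1)]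
    by (intro exI[of _ "xs \<circ> f"]) (auto simp: a_def)
  have lmu: "0 < \<mu> - l" using lC by (simp add: \<mu>_def)
  have vlow: "1 / (\<mu> - l) \<le> v"
  proof -
    have "(\<lambda>n. inner (T (xs (f n))) (xs (f n))) \<longlonglongrightarrow> l" using LIMSEQ_subseq_LIMSEQ[OF xs(4) f(1)] by (simp add: comp_def)
    then have "(\<lambda>n. 1 / (\<mu> - inner (T (xs (f n))) (xs (f n)))) \<longlonglongrightarrow> 1 / (\<mu> - l)"
      using lmu by (intro tendsto_intros) auto
    then show ?thesis using v alow sxs by (intro tendsto_le[OF _ v]) (auto intro: always_eventually)
  qed
  define r where "r = RB.m"
  have Ser: "Se UNIV R r" unfolding r_def using RB.BC[OF WeR] .
  have vr: "v \<le> r" unfolding r_def using RB.rho_le[OF WeR] .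
  have r0: "0 < r" using vr vlow lmu by (smt (verit) divide_pos_pos)
  obtain u where u: "\<And>k. norm (u k) = 1" "wnull u" "(\<lambda>k. norm (R (u k) - r *\<^sub>R u k)) \<longlonglongrightarrow> 0"
    using Ser unfolding Se_def by blast
  define b where "b = \<mu> - 1 / r"
  have "Se D T b"
  proof (rule Se_norm[where x="\<lambda>k. R (u k)" and \<delta>="r/2"])
    show "R (u k) \<in> D" for k by (rule RD)
    show "wnull (\<lambda>k. R (u k))" unfolding wnull_def
    proof
      fix y
      have "(\<lambda>k. inner (u k) (R y)) \<longlonglongrightarrow> 0" using u(2) unfolding wnull_def by blast
      then show "(\<lambda>k. inner (R (u k)) y) \<longlonglongrightarrow> 0" by (simp add: Rsym)
    qed
    show "0 < r / 2" using r0 by simp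
    have nRu: "(\<lambda>k. norm (R (u k))) \<longlonglongrightarrow> r"
    proof -
      have "norm (norm (R (u k)) - r) \<le> norm (R (u k) - r *\<^sub>R u k) * 1" for k
        using norm_triangle_ineq3[of "R (u k)" "r *\<^sub>R u k"] u(1)[of k] r0 by simp
      then have "(\<lambda>k. norm (R (u k)) - r) \<longlonglongrightarrow> 0"
        by (intro tendsto_0_le[OF u(3), where K=1]) (auto intro: always_eventually)
      then show ?thesis by (simp add: LIM_zero_iff)
    qed
    have ev: "eventually (\<lambda>k. r / 2 < norm (R (u k))) sequentially"
      by (rule order_tendstoD(1)[OF nRu]) (use r0 in simp)
    show "eventually (\<lambda>k. r / 2 \<le> norm (R (u k))) sequentially"
      by (rule eventually_mono[OF ev]) simp
    have "T (R (u k)) - b *\<^sub>R R (u k) = (1 / r) *\<^sub>R (R (u k) - r *\<^sub>R u k)" for k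
    proof -
      have "T (R (u k)) = \<mu> *\<^sub>R R (u k) - u k" using sR[of "u k"] by (simp add: s_def algebra_simps)
      then show ?thesis using r0 by (simp add: b_def algebra_simps)
    qed
    then have "norm (norm (T (R (u k)) - b *\<^sub>R R (u k))) \<le> norm (R (u k) - r *\<^sub>R u k) * (1 / r)" for k
      using r0 by simp
    then show "(\<lambda>k. norm (T (R (u k)) - b *\<^sub>R R (u k))) \<longlonglongrightarrow> 0"
      by (intro tendsto_0_le[OF u(3), where K="1/r"]) (auto intro: always_eventually)
  qed
  moreover have "l \<le> b"
  proof -
    have "1 / (\<mu> - l) \<le> r" using vlow vr by simp
    then have "1 / r \<le> \<mu> - l" using r0 lmu by (simp add: field_simps)
    then show ?thesis by (simp add: b_def)
  qed
  ultimately show ?thesis by (intro exI[of _ b]) simp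
qed

end

context sa begin

lemma neg_sa: "sa D (\<lambda>x. - T x)"
proof unfold_locales
  show "0 \<in> D" by (rule D0)
  show "x + y \<in> D" if "x \<in> D" "y \<in> D" for x y using that by (rule Dadd)
  show "c *\<^sub>R x \<in> D" if "x \<in> D" for x c using that by (rule Dscale)
  show "- T (x + y) = - T x + - T y" if "x \<in> D" "y \<in> D" for x y using Tadd[OF that] by simp
  show "- T (c *\<^sub>R x) = c *\<^sub>R - T x" if "x \<in> D" for x c using Tscale[OF that] by simp
  show "inner (- T x) y = inner x (- T y)" if "x \<in> D" "y \<in> D" for x y using sym[OF that] by simp
  show "\<exists>d\<in>D. norm (x - d) < e" if "e > 0" for x e using dense[OF that] .
  show "y \<in> D" if h: "\<forall>x\<in>D. inner (- T x) y = inner x z" for y z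
  proof (rule adj[of y "- z"], intro ballI)
    fix x assume "x \<in> D"
    then have "- inner (T x) y = inner x z" using h by simp
    then show "inner (T x) y = inner x (- z)" by simp
  qed
qed

lemma We_neg: "We D (\<lambda>x. - T x) l \<longleftrightarrow> We D T (- l)"
proof -
  have "((\<lambda>k. inner (- T (xs k)) (xs k)) \<longlonglongrightarrow> l) \<longleftrightarrow> ((\<lambda>k. inner (T (xs k)) (xs k)) \<longlonglongrightarrow> - l)" for xs
    using tendsto_minus_cancel_left[of "\<lambda>k. inner (T (xs k)) (xs k)" l sequentially] by simp
  then show ?thesis unfolding We_def by simp
qed

lemma Se_neg: "Se D (\<lambda>x. - T x) l \<longleftrightarrow> Se D T (- l)"
proof -
  have "norm (- T x - l *\<^sub>R x) = norm (T x - (- l) *\<^sub>R x)" for x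
    using norm_minus_cancel[of "T x - (- l) *\<^sub>R x"] by (simp add: algebra_simps)
  then show ?thesis unfolding Se_def by simp
qed

lemma bdd_neg: "bdd_ab D (\<lambda>x. - T x) \<longleftrightarrow> bdd_bl D T"
proof
  assume "bdd_ab D (\<lambda>x. - T x)"
  then obtain C where "\<forall>x\<in>D. inner (- T x) x \<le> C * (norm x)\<^sup>2" unfolding bdd_ab_def by blast
  then have "\<forall>x\<in>D. (- C) * (norm x)\<^sup>2 \<le> inner (T x) x" by (smt (verit) inner_minus_left mult_minus_left)
  then show "bdd_bl D T" unfolding bdd_bl_def by blast
next
  assume "bdd_bl D T"
  then obtain C where "\<forall>x\<in>D. C * (norm x)\<^sup>2 \<le> inner (T x) x" unfolding bdd_bl_def by blast
  then have "\<forall>x\<in>D. inner (- T x) x \<le> (- C) * (norm x)\<^sup>2" by (smt (verit) inner_minus_left mult_minus_left)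
  then show "bdd_ab D (\<lambda>x. - T x)" unfolding bdd_ab_def by blast
qed

lemma L1:
  assumes "bdd_bl D T" "We D T l"
  shows "\<exists>a\<le>l. Se D T a"
proof -
  interpret N: sa D "\<lambda>x. - T x" by (rule neg_sa)
  have "bdd_ab D (\<lambda>x. - T x)" using assms(1) bdd_neg by simp
  moreover have "We D (\<lambda>x. - T x) (- l)" using assms(2) We_neg by simp
  ultimately obtain b where "b \<ge> - l" "Se D (\<lambda>x. - T x) b" using N.U1 by blast
  then show ?thesis using Se_neg by (intro exI[of _ "- b"]) auto
qed

lemma up_seq:
  assumes "(\<exists>b>l. Se D T b) \<or> \<not> bdd_ab D T"
  shows "\<exists>xs. (\<forall>k. xs k \<in> D) \<and> (\<forall>k. norm (xs k) = 1) \<and> wnull xs \<and> (\<forall>k. l \<le> inner (T (xs k)) (xs k))"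
  using assms
proof
  assume "\<exists>b>l. Se D T b"
  then obtain b where b: "l < b" "Se D T b" by blast
  then obtain xs where xs: "\<And>k. xs k \<in> D" "\<And>k. norm (xs k) = 1" "wnull xs"
    "(\<lambda>k. inner (T (xs k)) (xs k)) \<longlonglongrightarrow> b" using Se_We unfolding We_def by blast
  have "eventually (\<lambda>k. l < inner (T (xs k)) (xs k)) sequentially"
    by (rule order_tendstoD(1)[OF xs(4) b(1)])
  then have "eventually (\<lambda>k. l \<le> inner (T (xs k)) (xs k)) sequentially"
    by (rule eventually_mono) simp
  then show ?thesis using shift_seq[of xs "\<lambda>x. l \<le> inner (T x) x", OF xs(1,2,3)] by blast
next
  assume "\<not> bdd_ab D T"
  then obtain g where g: "orthonormal_seq g" "\<And>n. g n \<in> D" "\<And>n. real n \<le> inner (T (g n)) (g n)"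
    using unbdd_seq by blast
  have "eventually (\<lambda>n. l \<le> inner (T (g n)) (g n)) sequentially"
    unfolding eventually_sequentially
  proof (intro exI allI impI)
    fix n assume "nat \<lceil>l\<rceil> \<le> n"
    then have "l \<le> real n" by linarith
    then show "l \<le> inner (T (g n)) (g n)" using g(3)[of n] by linarith
  qed
  moreover have "\<And>k. norm (g k) = 1" using g(1) unfolding orthonormal_seq_def by blast
  ultimately show ?thesis using shift_seq[of g "\<lambda>x. l \<le> inner (T x) x", OF g(2) _ wnull_ortho[OF g(1)]] by blast
qed

lemma low_seq:
  assumes "(\<exists>a<l. Se D T a) \<or> \<not> bdd_bl D T"
  shows "\<exists>xs. (\<forall>k. xs k \<in> D) \<and> (\<forall>k. norm (xs k) = 1) \<and> wnull xs \<and> (\<forall>k. inner (T (xs k)) (xs k) \<le> l)"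
proof -
  interpret N: sa D "\<lambda>x. - T x" by (rule neg_sa)
  have "(\<exists>b>- l. Se D (\<lambda>x. - T x) b) \<or> \<not> bdd_ab D (\<lambda>x. - T x)"
  proof (cases "\<exists>a<l. Se D T a")
    case True
    then obtain a where "a < l" "Se D T a" by blast
    then have "- a > - l" "Se D (\<lambda>x. - T x) (- a)" using Se_neg by auto
    then show ?thesis by blast
  next
    case False
    then show ?thesis using assms bdd_neg by blast
  qed
  then obtain xs where "\<forall>k. xs k \<in> D" "\<forall>k. norm (xs k) = 1" "wnull xs" "\<forall>k. - l \<le> inner (- T (xs k)) (xs k)"
    using N.up_seq by blast
  then show ?thesis by (intro exI[of _ xs]) auto
qed

theorem We_char:
  "We D T l \<longleftrightarrow> ((\<exists>a\<le>l. Se D T a) \<or> \<not> bdd_bl D T) \<and> ((\<exists>b\<ge>l. Se D T b) \<or> \<not> bdd_ab D T)"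
proof
  assume "We D T l"
  then show "((\<exists>a\<le>l. Se D T a) \<or> \<not> bdd_bl D T) \<and> ((\<exists>b\<ge>l. Se D T b) \<or> \<not> bdd_ab D T)"
    using U1 L1 by blast
next
  assume H: "((\<exists>a\<le>l. Se D T a) \<or> \<not> bdd_bl D T) \<and> ((\<exists>b\<ge>l. Se D T b) \<or> \<not> bdd_ab D T)"
  show "We D T l"
  proof (cases "Se D T l")
    case True then show ?thesis by (rule Se_We)
  next
    case False
    have lo: "(\<exists>a<l. Se D T a) \<or> \<not> bdd_bl D T"
      using H False by (metis order.not_eq_order_implies_strict)
    have hi: "(\<exists>b>l. Se D T b) \<or> \<not> bdd_ab D T"
      using H False by (metis order.not_eq_order_implies_strict)
    obtain xs where xs: "\<forall>k. xs k \<in> D" "\<forall>k. norm (xs k) = 1" "wnull xs" "\<forall>k. inner (T (xs k)) (xs k) \<le> l"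
      using low_seq[OF lo] by blast
    obtain ys where ys: "\<forall>k. ys k \<in> D" "\<forall>k. norm (ys k) = 1" "wnull ys" "\<forall>k. l \<le> inner (T (ys k)) (ys k)"
      using up_seq[OF hi] by blast
    show ?thesis using mix[of xs l ys] xs ys by blast
  qed
qed

end

lemma l2_prod_summable:
  assumes "x \<in> l2" "y \<in> l2"
  shows "summable (\<lambda>n. x n * cnj (y n))"
proof (rule summable_norm_cancel, rule summable_comparison_test')
  show "summable (\<lambda>n. ((cmod (x n))\<^sup>2 + (cmod (y n))\<^sup>2) / 2)"
    using assms unfolding l2_def by (intro summable_divide summable_add) auto
  show "norm (norm (x n * cnj (y n))) \<le> ((cmod (x n))\<^sup>2 + (cmod (y n))\<^sup>2) / 2" for n
  proof -
    have "0 \<le> (cmod (x n) - cmod (y n))\<^sup>2" by simp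
    then show ?thesis by (simp add: norm_mult power2_eq_square algebra_simps)
  qed
qed

lemma l2_add: "x \<in> l2 \<Longrightarrow> y \<in> l2 \<Longrightarrow> (\<lambda>n. x n + y n) \<in> l2"
  unfolding l2_def
proof (simp, rule summable_comparison_test')
  assume a: "summable (\<lambda>n. (cmod (x n))\<^sup>2)" "summable (\<lambda>n. (cmod (y n))\<^sup>2)"
  show "summable (\<lambda>n. 2 * (cmod (x n))\<^sup>2 + 2 * (cmod (y n))\<^sup>2)"
    using a by (intro summable_add summable_mult) auto
  show "norm ((cmod (x n + y n))\<^sup>2) \<le> 2 * (cmod (x n))\<^sup>2 + 2 * (cmod (y n))\<^sup>2" for n
  proof -
    have "cmod (x n + y n) \<le> cmod (x n) + cmod (y n)" by (rule norm_triangle_ineq)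
    then have "(cmod (x n + y n))\<^sup>2 \<le> (cmod (x n) + cmod (y n))\<^sup>2" by (intro power_mono) auto
    moreover have "0 \<le> (cmod (x n) - cmod (y n))\<^sup>2" by simp
    ultimately show ?thesis by (simp add: power2_eq_square algebra_simps)
  qed
qed

lemma l2_scale: "x \<in> l2 \<Longrightarrow> (\<lambda>n. c * x n) \<in> l2"
  unfolding l2_def by (simp add: norm_mult power_mult_distrib summable_mult)

lemma l2_uminus: "x \<in> l2 \<Longrightarrow> (\<lambda>n. - x n) \<in> l2"
  unfolding l2_def by simp

lemma l2_diff: "x \<in> l2 \<Longrightarrow> y \<in> l2 \<Longrightarrow> (\<lambda>n. x n - y n) \<in> l2"
  using l2_add[of x "\<lambda>n. - y n"] l2_uminus[of y] by simp

lemma l2_zero: "(\<lambda>n. 0) \<in> l2" unfolding l2_def by simp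

lemma linner_self: "x \<in> l2 \<Longrightarrow> linner x x = complex_of_real (\<Sum>n. (cmod (x n))\<^sup>2)"
  unfolding linner_def l2_def
  by (simp add: complex_norm_square[symmetric] suminf_of_real)

lemma l2norm_sq: "x \<in> l2 \<Longrightarrow> (l2norm x)\<^sup>2 = (\<Sum>n. (cmod (x n))\<^sup>2)"
  unfolding l2norm_def l2_def by (simp add: suminf_nonneg)

typedef l2t = l2 morphisms vec_of to_l2
  using l2_zero by blast

setup_lifting type_definition_l2t

instantiation l2t :: real_vector
begin
lift_definition zero_l2t :: l2t is "\<lambda>n. 0" by (rule l2_zero)
lift_definition plus_l2t :: "l2t \<Rightarrow> l2t \<Rightarrow> l2t" is "\<lambda>x y n. x n + y n" by (rule l2_add)
lift_definition uminus_l2t :: "l2t \<Rightarrow> l2t" is "\<lambda>x n. - x n" by (rule l2_uminus)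
lift_definition minus_l2t :: "l2t \<Rightarrow> l2t \<Rightarrow> l2t" is "\<lambda>x y n. x n - y n" by (rule l2_diff)
lift_definition scaleR_l2t :: "real \<Rightarrow> l2t \<Rightarrow> l2t" is "\<lambda>r x n. complex_of_real r * x n" by (rule l2_scale)
instance
  by standard (transfer; auto simp: algebra_simps)+
end


lemma linner_cnj: "x \<in> l2 \<Longrightarrow> y \<in> l2 \<Longrightarrow> linner y x = cnj (linner x y)"
proof -
  assume a: "x \<in> l2" "y \<in> l2"
  have "(\<lambda>n. x n * cnj (y n)) sums linner x y"
    unfolding linner_def using l2_prod_summable[OF a] by (rule summable_sums)
  then have "(\<lambda>n. cnj (x n * cnj (y n))) sums cnj (linner x y)" by (simp only: sums_cnj)
  then have "(\<lambda>n. y n * cnj (x n)) sums cnj (linner x y)" by (simp add: mult.commute)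
  then show ?thesis unfolding linner_def by (rule sums_unique[symmetric])
qed

lemma Re_linner_commute: "x \<in> l2 \<Longrightarrow> y \<in> l2 \<Longrightarrow> Re (linner x y) = Re (linner y x)"
  by (simp add: linner_cnj[of x y])

lemma linner_add_left: "x \<in> l2 \<Longrightarrow> y \<in> l2 \<Longrightarrow> z \<in> l2 \<Longrightarrow>
   linner (\<lambda>n. x n + y n) z = linner x z + linner y z"
  unfolding linner_def using l2_prod_summable[of x z] l2_prod_summable[of y z]
  by (simp add: suminf_add distrib_right)

lemma linner_scale_left: "x \<in> l2 \<Longrightarrow> z \<in> l2 \<Longrightarrow> linner (\<lambda>n. c * x n) z = c * linner x z"
  unfolding linner_def using l2_prod_summable[of x z]
  by (simp add: suminf_mult mult.assoc)

lemma l2_sum_zero_iff: "x \<in> l2 \<Longrightarrow> (\<Sum>n. (cmod (x n))\<^sup>2) = 0 \<longleftrightarrow> x = (\<lambda>n. 0)"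
  unfolding l2_def by (subst suminf_eq_zero_iff) (auto simp: fun_eq_iff)

instantiation l2t :: real_inner
begin
lift_definition inner_l2t :: "l2t \<Rightarrow> l2t \<Rightarrow> real" is "\<lambda>x y. Re (linner x y)" .
lift_definition norm_l2t :: "l2t \<Rightarrow> real" is "l2norm" .
definition dist_l2t :: "l2t \<Rightarrow> l2t \<Rightarrow> real" where "dist_l2t x y = norm (x - y)"
definition sgn_l2t :: "l2t \<Rightarrow> l2t" where "sgn_l2t x = x /\<^sub>R norm x"
definition uniformity_l2t :: "(l2t \<times> l2t) filter" where
  "uniformity_l2t = (INF e\<in>{0<..}. principal {(x, y). dist x y < e})"
definition open_l2t :: "l2t set \<Rightarrow> bool" where
  "open_l2t U \<longleftrightarrow> (\<forall>x\<in>U. \<forall>\<^sub>F (x', y) in uniformity. x' = x \<longrightarrow> y \<in> U)"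
instance
proof
  show "dist x y = norm (x - y)" for x y :: l2t by (simp add: dist_l2t_def)
  show "sgn x = x /\<^sub>R norm x" for x :: l2t by (simp add: sgn_l2t_def)
  show "(uniformity :: (l2t \<times> l2t) filter) = (INF e\<in>{0<..}. principal {(x, y). dist x y < e})"
    by (simp add: uniformity_l2t_def)
  show "open U \<longleftrightarrow> (\<forall>x\<in>U. \<forall>\<^sub>F (x', y) in uniformity. x' = x \<longrightarrow> y \<in> U)" for U :: "l2t set"
    by (simp add: open_l2t_def)
  show "inner x y = inner y x" for x y :: l2t
    by transfer (rule Re_linner_commute)
  show "inner (x + y) z = inner x z + inner y z" for x y z :: l2t
    by transfer (simp add: linner_add_left)
  show "inner (r *\<^sub>R x) y = r * inner x y" for r and x y :: l2t
    by transfer (simp add: linner_scale_left)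
  show "0 \<le> inner x x" for x :: l2t
    by transfer (simp add: linner_self l2_def suminf_nonneg)
  show "inner x x = 0 \<longleftrightarrow> x = 0" for x :: l2t
    by transfer (simp add: linner_self l2_sum_zero_iff)
  show "norm x = sqrt (inner x x)" for x :: l2t
    by transfer (simp add: linner_self l2norm_def)
qed
end


lemma vec_l2: "vec_of a \<in> l2" using vec_of by blast

lemma sq_summable: "summable (\<lambda>n. (cmod (vec_of a n))\<^sup>2)"
  using vec_l2[of a] unfolding l2_def by blast

lemma norm_sq_l2t: "(norm a)\<^sup>2 = (\<Sum>n. (cmod (vec_of a n))\<^sup>2)"
  by (simp add: norm_l2t.rep_eq l2norm_sq[OF vec_l2])

lemma partial_le: "(\<Sum>n<M. (cmod (vec_of a n))\<^sup>2) \<le> (norm a)\<^sup>2"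
  unfolding norm_sq_l2t using sq_summable by (intro sum_le_suminf) auto

lemma coord_le: "cmod (vec_of a n) \<le> norm a"
proof -
  have "(\<Sum>m\<in>{n}. (cmod (vec_of a m))\<^sup>2) \<le> (norm a)\<^sup>2"
    unfolding norm_sq_l2t using sq_summable by (intro sum_le_suminf) auto
  then have "(cmod (vec_of a n))\<^sup>2 \<le> (norm a)\<^sup>2" by simp
  then show ?thesis by (rule power2_le_imp_le) simp
qed

instance l2t :: complete_space
proof
  fix X :: "nat \<Rightarrow> l2t" assume C: "Cauchy X"
  define v where "v k = vec_of (X k)" for k
  have vd: "vec_of (X m - X k) = (\<lambda>n. v m n - v k n)" for m k by (simp add: minus_l2t.rep_eq v_def)
  have "Cauchy (\<lambda>k. v k n)" for n
  proof (rule CauchyI)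
    fix e :: real assume "0 < e"
    then obtain M where M: "\<And>m k. m \<ge> M \<Longrightarrow> k \<ge> M \<Longrightarrow> norm (X m - X k) < e" using CauchyD[OF C] by blast
    have "norm (v m n - v k n) < e" if "m \<ge> M" "k \<ge> M" for m k
      using coord_le[of "X m - X k" n] M[OF that] unfolding vd by simp
    then show "\<exists>M. \<forall>m\<ge>M. \<forall>k\<ge>M. norm (v m n - v k n) < e" by blast
  qed
  then have "\<exists>l. (\<lambda>k. v k n) \<longlonglongrightarrow> l" for n using Cauchy_convergent_iff convergent_def by blast
  then obtain x where x: "\<And>n. (\<lambda>k. v k n) \<longlonglongrightarrow> x n" by metis
  have main: "\<exists>N. \<forall>k\<ge>N. (\<lambda>n. v k n - x n) \<in> l2 \<and> (\<Sum>n. (cmod (v k n - x n))\<^sup>2) \<le> e\<^sup>2" if e: "0 < e" for e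
  proof -
    obtain N where N: "\<And>m k. m \<ge> N \<Longrightarrow> k \<ge> N \<Longrightarrow> norm (X m - X k) < e" using CauchyD[OF C e] by blast
    have "(\<lambda>n. v k n - x n) \<in> l2 \<and> (\<Sum>n. (cmod (v k n - x n))\<^sup>2) \<le> e\<^sup>2" if k: "k \<ge> N" for k
    proof -
      have pb: "(\<Sum>n<M. (cmod (v k n - x n))\<^sup>2) \<le> e\<^sup>2" for M
      proof -
        have "(\<lambda>m. \<Sum>n<M. (cmod (v k n - v m n))\<^sup>2) \<longlonglongrightarrow> (\<Sum>n<M. (cmod (v k n - x n))\<^sup>2)"
          using x by (intro tendsto_intros)
        moreover have "eventually (\<lambda>m. (\<Sum>n<M. (cmod (v k n - v m n))\<^sup>2) \<le> e\<^sup>2) sequentially"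
          unfolding eventually_sequentially
        proof (intro exI allI impI)
          fix m assume "N \<le> m"
          have "(\<Sum>n<M. (cmod (v k n - v m n))\<^sup>2) \<le> (norm (X k - X m))\<^sup>2"
            using partial_le[where M=M and a="X k - X m"] unfolding vd .
          also have "\<dots> \<le> e\<^sup>2" using N[OF k \<open>N \<le> m\<close>] by (intro power_mono) auto
          finally show "(\<Sum>n<M. (cmod (v k n - v m n))\<^sup>2) \<le> e\<^sup>2" .
        qed
        ultimately show ?thesis by (rule tendsto_upperbound) simp
      qed
      have sm: "summable (\<lambda>n. (cmod (v k n - x n))\<^sup>2)" using pb by (intro summableI_nonneg_bounded) auto
      then show ?thesis using pb unfolding l2_def by (auto intro: suminf_le_const)
    qed
    then show ?thesis by blast
  qed
  obtain N1 where N1: "(\<lambda>n. v N1 n - x n) \<in> l2" using main[of 1] by auto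
  have xl2: "x \<in> l2" using l2_diff[OF vec_l2[of "X N1"] N1] by (simp add: v_def)
  define L where "L = to_l2 x"
  have vL: "vec_of L = x" unfolding L_def using xl2 by (simp add: to_l2_inverse)
  have "X \<longlonglongrightarrow> L"
  proof (rule LIMSEQ_I)
    fix r :: real assume r: "0 < r"
    obtain N where N: "\<And>k. k \<ge> N \<Longrightarrow> (\<Sum>n. (cmod (v k n - x n))\<^sup>2) \<le> (r/2)\<^sup>2"
      using main[of "r/2"] r by auto
    have "norm (X k - L) < r" if "k \<ge> N" for k
    proof -
      have "(norm (X k - L))\<^sup>2 = (\<Sum>n. (cmod (v k n - x n))\<^sup>2)"
        unfolding norm_sq_l2t by (simp add: minus_l2t.rep_eq vL v_def)
      also have "\<dots> \<le> (r/2)\<^sup>2" using N[OF that] .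
      finally have "norm (X k - L) \<le> r/2" by (rule power2_le_imp_le) (use r in simp)
      then show ?thesis using r by simp
    qed
    then show "\<exists>no. \<forall>n\<ge>no. norm (X n - L) < r" by blast
  qed
  then show "convergent X" unfolding convergent_def by blast
qed


lemmas vec_zero = zero_l2t.rep_eq
lemmas vec_plus = plus_l2t.rep_eq
lemmas vec_minus = minus_l2t.rep_eq
lemmas vec_scaleR = scaleR_l2t.rep_eq
lemmas inner_vec = inner_l2t.rep_eq
lemmas norm_vec = norm_l2t.rep_eq

lemma linner_scale_right:
  assumes x: "x \<in> l2" and y: "y \<in> l2"
  shows "linner x (\<lambda>n. c * y n) = cnj c * linner x y"
proof -
  have "linner x (\<lambda>n. c * y n) = cnj (linner (\<lambda>n. c * y n) x)" by (rule linner_cnj[OF l2_scale[OF y] x])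
  also have "\<dots> = cnj (c * linner y x)" by (simp add: linner_scale_left y x)
  also have "\<dots> = cnj c * linner x y" by (simp add: linner_cnj[OF y x])
  finally show ?thesis .
qed

lemma Re_i_linner: "x \<in> l2 \<Longrightarrow> y \<in> l2 \<Longrightarrow> Re (linner x (\<lambda>n. \<i> * y n)) = Im (linner x y)"
  by (simp add: linner_scale_right)

lemma weak_iff:
  assumes "\<And>k. xs k \<in> l2"
  shows "weak_to_zero xs \<longleftrightarrow> wnull (\<lambda>k. to_l2 (xs k))"
proof
  assume w: "weak_to_zero xs"
  show "wnull (\<lambda>k. to_l2 (xs k))" unfolding wnull_def
  proof
    fix y :: l2t
    have "(\<lambda>k. linner (xs k) (vec_of y)) \<longlonglongrightarrow> 0" using w vec_l2[of y] unfolding weak_to_zero_def by blast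
    then have "(\<lambda>k. Re (linner (xs k) (vec_of y))) \<longlonglongrightarrow> Re 0" by (rule tendsto_Re)
    then show "(\<lambda>k. inner (to_l2 (xs k)) y) \<longlonglongrightarrow> 0" using assms by (simp add: inner_vec to_l2_inverse)
  qed
next
  assume w: "wnull (\<lambda>k. to_l2 (xs k))"
  show "weak_to_zero xs" unfolding weak_to_zero_def
  proof
    fix y assume y: "y \<in> l2"
    have iy: "(\<lambda>n. \<i> * y n) \<in> l2" using y by (rule l2_scale)
    have "(\<lambda>k. inner (to_l2 (xs k)) (to_l2 y)) \<longlonglongrightarrow> 0" using w unfolding wnull_def by blast
    then have re: "(\<lambda>k. Re (linner (xs k) y)) \<longlonglongrightarrow> 0" using assms y by (simp add: inner_vec to_l2_inverse)
    have "(\<lambda>k. inner (to_l2 (xs k)) (to_l2 (\<lambda>n. \<i> * y n))) \<longlonglongrightarrow> 0" using w unfolding wnull_def by blast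
    then have im: "(\<lambda>k. Im (linner (xs k) y)) \<longlonglongrightarrow> 0"
      using assms y iy by (simp add: inner_vec to_l2_inverse Re_i_linner)
    show "(\<lambda>k. linner (xs k) y) \<longlonglongrightarrow> 0" using re im by (simp add: tendsto_complex_iff)
  qed
qed

locale conc =
  fixes D :: "vec set" and T :: "vec \<Rightarrow> vec"
  assumes SA: "selfadjoint D T"
begin

definition "D' = {a. vec_of a \<in> D}"
definition "T' a = to_l2 (T (vec_of a))"

lemma lin: "lin_op D T" using SA unfolding selfadjoint_def by blast
lemma Dl2: "x \<in> D \<Longrightarrow> x \<in> l2" using lin unfolding lin_op_def by blast
lemma Tl2: "x \<in> D \<Longrightarrow> T x \<in> l2" using lin unfolding lin_op_def by blast
lemma cD0: "(\<lambda>n. 0) \<in> D" using lin unfolding lin_op_def by blast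
lemma cDadd: "x \<in> D \<Longrightarrow> y \<in> D \<Longrightarrow> (\<lambda>n. x n + y n) \<in> D" using lin unfolding lin_op_def vadd_def by blast
lemma cDscale: "x \<in> D \<Longrightarrow> (\<lambda>n. c * x n) \<in> D" using lin unfolding lin_op_def by blast
lemma cTadd: "x \<in> D \<Longrightarrow> y \<in> D \<Longrightarrow> T (\<lambda>n. x n + y n) = (\<lambda>n. T x n + T y n)"
  using lin unfolding lin_op_def vadd_def by blast
lemma cTscale: "x \<in> D \<Longrightarrow> T (\<lambda>n. c * x n) = (\<lambda>n. c * T x n)" using lin unfolding lin_op_def by blast
lemma csym: "x \<in> D \<Longrightarrow> y \<in> D \<Longrightarrow> linner (T x) y = linner x (T y)"
  using SA unfolding selfadjoint_def by blast
lemma cdense: "x \<in> l2 \<Longrightarrow> e > 0 \<Longrightarrow> \<exists>d\<in>D. l2norm (vsub x d) < e"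
  using SA unfolding selfadjoint_def densely_defined_def by blast
lemma cadj: "y \<in> l2 \<Longrightarrow> z \<in> l2 \<Longrightarrow> (\<forall>x\<in>D. linner (T x) y = linner x z) \<Longrightarrow> y \<in> D"
  using SA unfolding selfadjoint_def by blast

lemma vT: "a \<in> D' \<Longrightarrow> vec_of (T' a) = T (vec_of a)"
  unfolding T'_def D'_def using Tl2 by (simp add: to_l2_inverse)

lemma sa': "sa D' T'"
proof unfold_locales
  show "0 \<in> D'" unfolding D'_def using cD0 by (simp add: vec_zero)
  show "x + y \<in> D'" if "x \<in> D'" "y \<in> D'" for x y using that cDadd unfolding D'_def by (simp add: vec_plus)
  show "c *\<^sub>R x \<in> D'" if "x \<in> D'" for x c using that cDscale unfolding D'_def by (simp add: vec_scaleR)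
  show "T' (x + y) = T' x + T' y" if "x \<in> D'" "y \<in> D'" for x y
  proof -
    have "x + y \<in> D'" using that cDadd unfolding D'_def by (simp add: vec_plus)
    then have "vec_of (T' (x + y)) = vec_of (T' x + T' y)"
      using that by (simp add: vT vec_plus cTadd D'_def)
    then show ?thesis by (simp add: vec_of_inject)
  qed
  show "T' (c *\<^sub>R x) = c *\<^sub>R T' x" if "x \<in> D'" for x c
  proof -
    have "c *\<^sub>R x \<in> D'" using that cDscale unfolding D'_def by (simp add: vec_scaleR)
    then have "vec_of (T' (c *\<^sub>R x)) = vec_of (c *\<^sub>R T' x)"
      using that by (simp add: vT vec_scaleR cTscale D'_def)
    then show ?thesis by (simp add: vec_of_inject)
  qed
  show "inner (T' x) y = inner x (T' y)" if "x \<in> D'" "y \<in> D'" for x y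
    using that by (simp add: inner_vec vT csym D'_def)
  show "\<exists>d\<in>D'. norm (x - d) < e" if e: "e > 0" for x e
  proof -
    obtain d where d: "d \<in> D" "l2norm (vsub (vec_of x) d) < e" using cdense[OF vec_l2 e] by blast
    have "to_l2 d \<in> D'" "norm (x - to_l2 d) = l2norm (vsub (vec_of x) d)"
      using d(1) Dl2[OF d(1)] by (auto simp: D'_def to_l2_inverse norm_vec vec_minus vsub_def)
    then show ?thesis using d(2) by metis
  qed
  show "y \<in> D'" if h: "\<forall>x\<in>D'. inner (T' x) y = inner x z" for y z
  proof -
    have "\<forall>x\<in>D. linner (T x) (vec_of y) = linner x (vec_of z)"
    proof
      fix x assume x: "x \<in> D"
      have re: "Re (linner (T u) (vec_of y)) = Re (linner u (vec_of z))" if u: "u \<in> D" for u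
      proof -
        have "to_l2 u \<in> D'" using u Dl2[OF u] by (simp add: D'_def to_l2_inverse)
        then have "inner (T' (to_l2 u)) y = inner (to_l2 u) z" using h by blast
        then show ?thesis using u Dl2[OF u] Tl2[OF u] by (simp add: inner_vec T'_def to_l2_inverse)
      qed
      have ix: "(\<lambda>n. \<i> * x n) \<in> D" using x by (rule cDscale)
      have "Re (linner (T (\<lambda>n. \<i> * x n)) (vec_of y)) = Re (linner (\<lambda>n. \<i> * x n) (vec_of z))"
        using re[OF ix] .
      then have "Re (\<i> * linner (T x) (vec_of y)) = Re (\<i> * linner x (vec_of z))"
        using x Dl2[OF x] Tl2[OF x] vec_l2[of y] vec_l2[of z]
        by (simp add: cTscale linner_scale_left)
      then have "Im (linner (T x) (vec_of y)) = Im (linner x (vec_of z))" by simp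
      then show "linner (T x) (vec_of y) = linner x (vec_of z)" using re[OF x] by (simp add: complex_eq_iff)
    qed
    then have "vec_of y \<in> D" using cadj[OF vec_l2 vec_l2] by blast
    then show ?thesis by (simp add: D'_def)
  qed
qed

interpretation A: sa D' T' by (rule sa')

lemma real_q: "x \<in> D \<Longrightarrow> linner (T x) x = complex_of_real (Re (linner (T x) x))"
proof -
  assume x: "x \<in> D"
  have "linner (T x) x = cnj (linner (T x) x)"
    using csym[OF x x] linner_cnj[OF Dl2[OF x] Tl2[OF x]] by simp
  then have "Im (linner (T x) x) = Im (cnj (linner (T x) x))" by (rule arg_cong)
  then have "Im (linner (T x) x) = 0" by simp
  then show ?thesis by (simp add: complex_eq_iff)
qed

lemma q_conc: "a \<in> D' \<Longrightarrow> inner (T' a) a = Re (linner (T (vec_of a)) (vec_of a))"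
  by (simp add: inner_vec vT)

lemma ess_num_range_eq: "ess_num_range D T = complex_of_real ` {l. We D' T' l}"
proof
  show "ess_num_range D T \<subseteq> complex_of_real ` {l. We D' T' l}"
  proof
    fix \<mu> assume "\<mu> \<in> ess_num_range D T"
    then obtain xs where xs: "\<And>k. xs k \<in> D" "\<And>k. l2norm (xs k) = 1" "weak_to_zero xs"
      "(\<lambda>k. linner (T (xs k)) (xs k)) \<longlonglongrightarrow> \<mu>" unfolding ess_num_range_def by blast
    have im: "(\<lambda>k. Im (linner (T (xs k)) (xs k))) \<longlonglongrightarrow> Im \<mu>" using xs(4) by (rule tendsto_Im)
    have i0: "Im (linner (T (xs k)) (xs k)) = 0" for k using real_q[OF xs(1)[of k]]
      by (metis Im_complex_of_real)
    have "(\<lambda>k. Im (linner (T (xs k)) (xs k))) = (\<lambda>k. 0)" using i0 by (rule ext)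
    then have "(\<lambda>k. 0::real) \<longlonglongrightarrow> Im \<mu>" using im by simp
    then have "Im \<mu> = 0" by (simp add: LIMSEQ_const_iff)
    then have mu: "\<mu> = complex_of_real (Re \<mu>)" by (simp add: complex_eq_iff)
    have "We D' T' (Re \<mu>)" unfolding We_def
    proof (intro exI[of _ "\<lambda>k. to_l2 (xs k)"] conjI allI)
      fix k
      show "to_l2 (xs k) \<in> D'" using xs(1) Dl2 by (simp add: D'_def to_l2_inverse)
      show "norm (to_l2 (xs k)) = 1" using xs(1,2) Dl2 by (simp add: norm_vec to_l2_inverse)
    next
      show "wnull (\<lambda>k. to_l2 (xs k))" using xs(3) weak_iff[of xs] Dl2 xs(1) by blast
      have "(\<lambda>k. Re (linner (T (xs k)) (xs k))) \<longlonglongrightarrow> Re \<mu>" using xs(4) by (rule tendsto_Re)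
      then show "(\<lambda>k. inner (T' (to_l2 (xs k))) (to_l2 (xs k))) \<longlonglongrightarrow> Re \<mu>"
        using xs(1) Dl2 Tl2 by (simp add: inner_vec T'_def to_l2_inverse)
    qed
    then show "\<mu> \<in> complex_of_real ` {l. We D' T' l}" using mu by blast
  qed
next
  show "complex_of_real ` {l. We D' T' l} \<subseteq> ess_num_range D T"
  proof
    fix \<mu> assume "\<mu> \<in> complex_of_real ` {l. We D' T' l}"
    then obtain l where l: "\<mu> = complex_of_real l" "We D' T' l" by blast
    then obtain a where a: "\<And>k. a k \<in> D'" "\<And>k. norm (a k) = 1" "wnull a"
      "(\<lambda>k. inner (T' (a k)) (a k)) \<longlonglongrightarrow> l" unfolding We_def by blast
    define xs where "xs k = vec_of (a k)" for k
    have xD: "xs k \<in> D" for k using a(1) by (simp add: xs_def D'_def)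
    have w: "weak_to_zero xs" using weak_iff[of xs] vec_l2 a(3) by (simp add: xs_def vec_of_inverse)
    have n: "l2norm (xs k) = 1" for k using a(2) by (simp add: xs_def norm_vec)
    have "(\<lambda>k. linner (T (xs k)) (xs k)) \<longlonglongrightarrow> \<mu>"
    proof -
      have "(\<lambda>k. complex_of_real (inner (T' (a k)) (a k))) \<longlonglongrightarrow> complex_of_real l"
        using a(4) by (rule tendsto_of_real)
      moreover have "complex_of_real (inner (T' (a k)) (a k)) = linner (T (xs k)) (xs k)" for k
        using q_conc[OF a(1)[of k]] real_q[OF xD[of k]] by (simp add: xs_def)
      ultimately show ?thesis using l(1) by simp
    qed
    then show "\<mu> \<in> ess_num_range D T" unfolding ess_num_range_def
      using xD w n by (intro CollectI exI[of _ xs] conjI allI) auto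
  qed
qed

lemma ess_spec_eq: "complex_of_real r \<in> ess_spec D T \<longleftrightarrow> Se D' T' r"
proof -
  have nrm: "l2norm (vsub (T x) (\<lambda>n. complex_of_real r * x n)) = norm (T' (to_l2 x) - r *\<^sub>R to_l2 x)"
    if x: "x \<in> D" for x
    using x Dl2[OF x] Tl2[OF x] by (simp add: norm_vec vec_minus vec_scaleR T'_def to_l2_inverse vsub_def)
  show ?thesis
  proof
    assume "complex_of_real r \<in> ess_spec D T"
    then obtain xs where xs: "\<And>k. xs k \<in> D" "\<And>k. l2norm (xs k) = 1" "weak_to_zero xs"
      "(\<lambda>k. l2norm (vsub (T (xs k)) (\<lambda>n. complex_of_real r * xs k n))) \<longlonglongrightarrow> 0"
      unfolding ess_spec_def by blast
    show "Se D' T' r" unfolding Se_def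
    proof (intro exI[of _ "\<lambda>k. to_l2 (xs k)"] conjI allI)
      fix k
      show "to_l2 (xs k) \<in> D'" using xs(1) Dl2 by (simp add: D'_def to_l2_inverse)
      show "norm (to_l2 (xs k)) = 1" using xs(1,2) Dl2 by (simp add: norm_vec to_l2_inverse)
    next
      show "wnull (\<lambda>k. to_l2 (xs k))" using xs(3) weak_iff[of xs] Dl2 xs(1) by blast
      show "(\<lambda>k. norm (T' (to_l2 (xs k)) - r *\<^sub>R to_l2 (xs k))) \<longlonglongrightarrow> 0" using xs(4) nrm[OF xs(1)] by simp
    qed
  next
    assume "Se D' T' r"
    then obtain a where a: "\<And>k. a k \<in> D'" "\<And>k. norm (a k) = 1" "wnull a"
      "(\<lambda>k. norm (T' (a k) - r *\<^sub>R a k)) \<longlonglongrightarrow> 0" unfolding Se_def by blast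
    define xs where "xs k = vec_of (a k)" for k
    have xD: "xs k \<in> D" for k using a(1) by (simp add: xs_def D'_def)
    have w: "weak_to_zero xs" using weak_iff[of xs] vec_l2 a(3) by (simp add: xs_def vec_of_inverse)
    have n: "l2norm (xs k) = 1" for k using a(2) by (simp add: xs_def norm_vec)
    have "(\<lambda>k. l2norm (vsub (T (xs k)) (\<lambda>n. complex_of_real r * xs k n))) \<longlonglongrightarrow> 0"
      using a(4) nrm[OF xD] by (simp add: xs_def vec_of_inverse)
    then show "complex_of_real r \<in> ess_spec D T" unfolding ess_spec_def
      using xD w n by (intro CollectI exI[of _ xs] conjI allI) auto
  qed
qed

lemma bdd_ab_eq: "bounded_above_op D T \<longleftrightarrow> bdd_ab D' T'"
proof -
  have "(\<forall>x\<in>D. Re (linner (T x) x) \<le> C * (l2norm x)\<^sup>2) \<longleftrightarrow> (\<forall>a\<in>D'. inner (T' a) a \<le> C * (norm a)\<^sup>2)" for C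
  proof
    assume h: "\<forall>x\<in>D. Re (linner (T x) x) \<le> C * (l2norm x)\<^sup>2"
    show "\<forall>a\<in>D'. inner (T' a) a \<le> C * (norm a)\<^sup>2" using h by (auto simp: q_conc D'_def norm_vec)
  next
    assume h: "\<forall>a\<in>D'. inner (T' a) a \<le> C * (norm a)\<^sup>2"
    show "\<forall>x\<in>D. Re (linner (T x) x) \<le> C * (l2norm x)\<^sup>2"
    proof
      fix x assume x: "x \<in> D"
      have "to_l2 x \<in> D'" using x Dl2[OF x] by (simp add: D'_def to_l2_inverse)
      then show "Re (linner (T x) x) \<le> C * (l2norm x)\<^sup>2"
        using h q_conc x Dl2[OF x] by (fastforce simp: norm_vec to_l2_inverse)
    qed
  qed
  then show ?thesis unfolding bounded_above_op_def bdd_ab_def by simp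
qed

lemma bdd_bl_eq: "bounded_below_op D T \<longleftrightarrow> bdd_bl D' T'"
proof -
  have "(\<forall>x\<in>D. C * (l2norm x)\<^sup>2 \<le> Re (linner (T x) x)) \<longleftrightarrow> (\<forall>a\<in>D'. C * (norm a)\<^sup>2 \<le> inner (T' a) a)" for C
  proof
    assume h: "\<forall>x\<in>D. C * (l2norm x)\<^sup>2 \<le> Re (linner (T x) x)"
    show "\<forall>a\<in>D'. C * (norm a)\<^sup>2 \<le> inner (T' a) a" using h by (auto simp: q_conc D'_def norm_vec)
  next
    assume h: "\<forall>a\<in>D'. C * (norm a)\<^sup>2 \<le> inner (T' a) a"
    show "\<forall>x\<in>D. C * (l2norm x)\<^sup>2 \<le> Re (linner (T x) x)"
    proof
      fix x assume x: "x \<in> D"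
      have "to_l2 x \<in> D'" using x Dl2[OF x] by (simp add: D'_def to_l2_inverse)
      then show "C * (l2norm x)\<^sup>2 \<le> Re (linner (T x) x)"
        using h q_conc x Dl2[OF x] by (fastforce simp: norm_vec to_l2_inverse)
    qed
  qed
  then show ?thesis unfolding bounded_below_op_def bdd_bl_def by simp
qed

lemma final: "ess_num_range D T =
    complex_of_real ` {r. ereal r \<in> conv_ereal (ext_ess_spec D T) - {\<infinity>, -\<infinity>}}"
proof -
  have "ereal r \<in> conv_ereal (ext_ess_spec D T) - {\<infinity>, -\<infinity>} \<longleftrightarrow> We D' T' r" for r
  proof -
    have lo: "(\<exists>a\<in>ext_ess_spec D T. a \<le> ereal r) \<longleftrightarrow> ((\<exists>a\<le>r. Se D' T' a) \<or> \<not> bdd_bl D' T')"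
      unfolding ext_ess_spec_def by (auto simp: ess_spec_eq bdd_bl_eq bdd_ab_eq)
    have hi: "(\<exists>b\<in>ext_ess_spec D T. ereal r \<le> b) \<longleftrightarrow> ((\<exists>b\<ge>r. Se D' T' b) \<or> \<not> bdd_ab D' T')"
      unfolding ext_ess_spec_def by (auto simp: ess_spec_eq bdd_bl_eq bdd_ab_eq)
    show ?thesis unfolding conv_ereal_def A.We_char using lo hi by auto
  qed
  then show ?thesis unfolding ess_num_range_eq by simp
qed

end


theorem theorem3p8:
  fixes D :: "vec set" and T :: "vec \<Rightarrow> vec"
  assumes "selfadjoint D T" and "\<not> bounded_op D T"
  shows "ess_num_range D T =
    complex_of_real ` {r. ereal r \<in> conv_ereal (ext_ess_spec D T) - {\<infinity>, -\<infinity>}}"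
proof -
  interpret C: conc D T by unfold_locales (rule assms(1))
  show ?thesis by (rule C.final)
qed

end
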